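(* In QED, for every $L\ge1$, $$W_L=\sum_{\Gamma^{\mathrm{el}}_L}\frac{1}{\mathrm{Sym}(\Gamma)}\,W(\Gamma),$$ the sum running over isomorphism classes of 1PI electron self-energy graphs with $L$ loops. Equivalently, $\sum_{\Gamma^{\mathrm{el}}_L}\frac{1}{\mathrm{Sym}(\Gamma)}\sum_{i}\Gamma(i)=\sum_{\Gamma^{\mathrm{v}}_L}\frac{1}{\mathrm{Sym}(\Gamma)}\Gamma$, the inner sum over internal electron edges $i$ of $\Gamma$.
   Context: QED Feynman graphs: one vertex type $\mathrm{v}$ (trivalent, one photon line and two electron lines) and two edge types, electron ($\mathrm{el}$) and photon ($\mathrm{ph}$); graphs have typed vertices/edges, incidence maps and labeled external lines; isomorphisms preserve types, incidence and external labels; $\mathrm{Sym}(\Gamma)=|\mathrm{Aut}(\Gamma)|$. A graph is 1PI if connected, not a tree, and still connected after removing any single edge; its residue is the vertex/edge type obtained by collapsing all internal edges; a 1PI graph with residue $\mathrm{el}$ (two external electron lines) is an electron self-energy graph, one with residue $\mathrm{v}$ a vertex graph; loop number = first Betti number. Working in the free commutative algebra $H$ on isomorphism classes of 1PI graphs, define for $L\ge1$: $W_L=\sum_{\Gamma^{\mathrm{v}}_L}\Gamma/\mathrm{Sym}(\Gamma)+\sum_{\Gamma^{\mathrm{el}}_L}\Gamma/\mathrm{Sym}(\Gamma)$ (sums over isomorphism classes of 1PI graphs with residue $\mathrm{v}$, resp. $\mathrm{el}$, and $L$ loops). For an electron self-energy graph $\Gamma$ and an internal electron edge $i$ of $\Gamma$,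 $\Gamma(i)$ is the vertex graph obtained by subdividing $i$ with a new vertex and attaching to it a new external photon line (with a fixed new label); the Ward–Takahashi element is $W(\Gamma)=\sum_i\Gamma(i)+\Gamma$, sum over all internal electron edges. *)

theory Defs
  imports Complex_Main "HOL-Library.Multiset" "HOL-Library.Poly_Mapping"
begin

datatype etype = El | Ph

text \<open>A QED graph: vertices and internal edges are named by naturals; each internal edge
  has a type and an (unordered) pair of end vertices, given as a 2-element multiset
  (so self-loops are representable); external lines are named by natural labels, each with
  a type and the vertex it is attached to.\<close>

record fgraph =
  V    :: "nat set"
  E    :: "nat set"
  ety  :: "nat \<Rightarrow> etype"
  ends :: "nat \<Rightarrow> nat multiset"
  X    :: "nat set"
  xty  :: "nat \<Rightarrow> etype"
  xv   :: "nat \<Rightarrow> nat"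

definition incid :: "fgraph \<Rightarrow> nat \<Rightarrow> etype \<Rightarrow> nat" where
  "incid G v t = (\<Sum>e\<in>{e\<in>E G. ety G e = t}. count (ends G e) v)
                 + card {l\<in>X G. xty G l = t \<and> xv G l = v}"

definition wf_graph :: "fgraph \<Rightarrow> bool" where
  "wf_graph G \<longleftrightarrow> finite (V G) \<and> finite (E G) \<and> finite (X G)
     \<and> (\<forall>e\<in>E G. size (ends G e) = 2 \<and> set_mset (ends G e) \<subseteq> V G)
     \<and> (\<forall>l\<in>X G. xv G l \<in> V G)
     \<and> (\<forall>v\<in>V G. incid G v El = 2 \<and> incid G v Ph = 1)"

definition adj :: "fgraph \<Rightarrow> (nat \<times> nat) set" where
  "adj G = {(u, w). \<exists>e\<in>E G. ends G e = {#u, w#}}"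

definition reach :: "fgraph \<Rightarrow> nat \<Rightarrow> nat \<Rightarrow> bool" where
  "reach G u w \<longleftrightarrow> (u, w) \<in> ((adj G) \<union> (adj G)\<inverse>)\<^sup>*"

definition connected_graph :: "fgraph \<Rightarrow> bool" where
  "connected_graph G \<longleftrightarrow> V G \<noteq> {} \<and> (\<forall>u\<in>V G. \<forall>w\<in>V G. reach G u w)"

definition ncomponents :: "fgraph \<Rightarrow> nat" where
  "ncomponents G = card {C. \<exists>v\<in>V G. C = {w\<in>V G. reach G v w}}"

definition loops :: "fgraph \<Rightarrow> int" where
  "loops G = int (card (E G)) - int (card (V G)) + int (ncomponents G)"

definition is_tree :: "fgraph \<Rightarrow> bool" where
  "is_tree G \<longleftrightarrow> connected_graph G \<and> loops G = 0"

definition delete_edge :: "fgraph \<Rightarrow> nat \<Rightarrow> fgraph" where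
  "delete_edge G e = G\<lparr>E := E G - {e}\<rparr>"

definition onePI :: "fgraph \<Rightarrow> bool" where
  "onePI G \<longleftrightarrow> connected_graph G \<and> \<not> is_tree G
     \<and> (\<forall>e\<in>E G. connected_graph (delete_edge G e))"

text \<open>Residues, with the convention that the external lines of the residue carry fixed labels:
  electron lines 0 and 1, photon line 2.\<close>
definition residue_el :: "fgraph \<Rightarrow> bool" where
  "residue_el G \<longleftrightarrow> X G = {0, 1} \<and> xty G 0 = El \<and> xty G 1 = El"

definition residue_v :: "fgraph \<Rightarrow> bool" where
  "residue_v G \<longleftrightarrow> X G = {0, 1, 2} \<and> xty G 0 = El \<and> xty G 1 = El \<and> xty G 2 = Ph"

definition graph_morph :: "fgraph \<Rightarrow> fgraph \<Rightarrow> (nat \<Rightarrow> nat) \<Rightarrow> (nat \<Rightarrow> nat) \<Rightarrow> bool" where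
  "graph_morph G H f g \<longleftrightarrow> bij_betw f (V G) (V H) \<and> bij_betw g (E G) (E H)
     \<and> (\<forall>e\<in>E G. ety H (g e) = ety G e \<and> ends H (g e) = image_mset f (ends G e))
     \<and> X H = X G \<and> (\<forall>l\<in>X G. xty H l = xty G l \<and> xv H l = f (xv G l))"

definition graph_iso :: "fgraph \<Rightarrow> fgraph \<Rightarrow> bool" where
  "graph_iso G H \<longleftrightarrow> (\<exists>f g. graph_morph G H f g)"

definition Aut :: "fgraph \<Rightarrow> ((nat \<Rightarrow> nat) \<times> (nat \<Rightarrow> nat)) set" where
  "Aut G = {(f, g). graph_morph G G f g \<and> (\<forall>x. x \<notin> V G \<longrightarrow> f x = x)
                                        \<and> (\<forall>e. e \<notin> E G \<longrightarrow> g e = e)}"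

definition Sym :: "fgraph \<Rightarrow> nat" where
  "Sym G = card (Aut G)"

definition iso_class :: "fgraph \<Rightarrow> fgraph set" where
  "iso_class G = {H. wf_graph H \<and> graph_iso G H}"

definition rep :: "fgraph set \<Rightarrow> fgraph" where
  "rep c = (SOME G. G \<in> c)"

text \<open>Free commutative Q-algebra on isomorphism classes (monoid algebra of the free commutative
  monoid (class \<Rightarrow>0 nat)).\<close>
type_synonym halg = "(fgraph set \<Rightarrow>\<^sub>0 nat) \<Rightarrow>\<^sub>0 rat"

definition gen :: "fgraph \<Rightarrow> halg" where
  "gen G = Poly_Mapping.single (Poly_Mapping.single (iso_class G) 1) 1"

definition hscale :: "rat \<Rightarrow> halg \<Rightarrow> halg" where
  "hscale r p = Poly_Mapping.single 0 r * p"

definition el_classes :: "nat \<Rightarrow> fgraph set set" where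
  "el_classes L = {iso_class G | G. wf_graph G \<and> onePI G \<and> residue_el G \<and> loops G = int L}"

definition v_classes :: "nat \<Rightarrow> fgraph set set" where
  "v_classes L = {iso_class G | G. wf_graph G \<and> onePI G \<and> residue_v G \<and> loops G = int L}"

definition W_L :: "nat \<Rightarrow> halg" where
  "W_L L = (\<Sum>c\<in>v_classes L. hscale (1 / of_nat (Sym (rep c))) (gen (rep c)))
         + (\<Sum>c\<in>el_classes L. hscale (1 / of_nat (Sym (rep c))) (gen (rep c)))"

definition fresh :: "nat set \<Rightarrow> nat" where
  "fresh A = Suc (Max (insert 0 A))"

text \<open>Subdivide internal edge i by a new vertex w and attach to w a new external photon line
  with label 2.\<close>
definition insert_photon :: "fgraph \<Rightarrow> nat \<Rightarrow> fgraph" where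
  "insert_photon G i =
    (let w = fresh (V G); e' = fresh (E G); a = (SOME a. a \<in># ends G i);
         b = ends G i - {#a#} in
     G\<lparr> V := insert w (V G),
        E := insert e' (E G),
        ety := (ety G)(e' := El),
        ends := (ends G)(i := {#a, w#}, e' := add_mset w b),
        X := insert 2 (X G),
        xty := (xty G)(2 := Ph),
        xv := (xv G)(2 := w) \<rparr>)"

definition el_edges :: "fgraph \<Rightarrow> nat set" where
  "el_edges G = {e\<in>E G. ety G e = El}"

definition WT :: "fgraph \<Rightarrow> halg" where
  "WT G = (\<Sum>i\<in>el_edges G. gen (insert_photon G i)) + gen G"

end

theory Submission
  imports Defs "HOL-Library.FuncSet"
begin

lemma adj_iff: "(x, y) \<in> adj G \<longleftrightarrow> (\<exists>e\<in>E G. ends G e = {#x, y#})"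
  by (simp add: adj_def)

lemma reach_refl: "reach G u u" by (simp add: reach_def)

lemma reach_sym: assumes "reach G u v" shows "reach G v u"
proof -
  let ?R = "adj G \<union> (adj G)\<inverse>"
  have "(v, u) \<in> (?R\<inverse>)\<^sup>*" using assms unfolding reach_def by (simp add: rtrancl_converseI)
  moreover have "?R\<inverse> = ?R" by auto
  ultimately show ?thesis unfolding reach_def by simp
qed

lemma reach_trans: "reach G u v \<Longrightarrow> reach G v w \<Longrightarrow> reach G u w"
  unfolding reach_def by (rule rtrancl_trans)

lemma reach_adj: "(u, v) \<in> adj G \<Longrightarrow> reach G u v"
  unfolding reach_def by auto

lemma reach_hom:
  assumes h: "\<And>x y. (x, y) \<in> adj G \<Longrightarrow> reach H (f x) (f y)" and r: "reach G u v"
  shows "reach H (f u) (f v)"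
  using r unfolding reach_def[of G]
proof (induction rule: rtrancl_induct)
  case base then show ?case by (rule reach_refl)
next
  case (step y z)
  have "reach H (f y) (f z)" using step(2) h reach_sym by blast
  then show ?case using step(3) reach_trans by blast
qed

lemma reach_closed:
  assumes h: "\<And>x y. (x, y) \<in> adj G \<Longrightarrow> (x \<in> S \<longleftrightarrow> y \<in> S)" and r: "reach G u v"
    and u: "u \<in> S"
  shows "v \<in> S"
  using r u unfolding reach_def[of G]
proof (induction rule: rtrancl_induct)
  case base then show ?case .
next
  case (step y z)
  then show ?case using h by blast
qed

lemma connectedD: "connected_graph G \<Longrightarrow> u \<in> V G \<Longrightarrow> w \<in> V G \<Longrightarrow> reach G u w"
  by (simp add: connected_graph_def)

lemma ncomp_connected: assumes "connected_graph G" shows "ncomponents G = 1"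
proof -
  have "{C. \<exists>v\<in>V G. C = {w\<in>V G. reach G v w}} = {V G}"
    using assms unfolding connected_graph_def by auto
  then show ?thesis unfolding ncomponents_def by simp
qed

lemma loops_connected: "connected_graph G \<Longrightarrow> loops G = int (card (E G)) - int (card (V G)) + 1"
  by (simp add: loops_def ncomp_connected)

lemma adj_delete: "(x, y) \<in> adj (delete_edge G e) \<longleftrightarrow> (\<exists>e'\<in>E G - {e}. ends G e' = {#x, y#})"
  by (simp add: adj_def delete_edge_def)

section \<open>morphisms\<close>

lemma morph_id: "graph_morph G G id id"
  by (simp add: graph_morph_def)

lemma morph_comp:
  assumes "graph_morph G H f g" "graph_morph H K f' g'"
  shows "graph_morph G K (f' \<circ> f) (g' \<circ> g)"
proof -
  have gE: "\<And>e. e \<in> E G \<Longrightarrow> g e \<in> E H" using assms(1) unfolding graph_morph_def bij_betw_def by auto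
  show ?thesis using assms unfolding graph_morph_def
    by (auto simp: bij_betw_trans gE multiset.map_comp)
qed

lemma wfD:
  assumes "wf_graph G"
  shows "finite (V G)" "finite (E G)" "finite (X G)"
    "\<And>e. e \<in> E G \<Longrightarrow> size (ends G e) = 2" "\<And>e. e \<in> E G \<Longrightarrow> set_mset (ends G e) \<subseteq> V G"
    "\<And>l. l \<in> X G \<Longrightarrow> xv G l \<in> V G"
    "\<And>v. v \<in> V G \<Longrightarrow> incid G v El = 2" "\<And>v. v \<in> V G \<Longrightarrow> incid G v Ph = 1"
  using assms unfolding wf_graph_def by auto

lemma morph_cong:
  assumes "wf_graph G" "graph_morph G H f g" "\<And>x. x \<in> V G \<Longrightarrow> f x = f' x"
    "\<And>e. e \<in> E G \<Longrightarrow> g e = g' e"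
  shows "graph_morph G H f' g'"
proof -
  have im: "image_mset f (ends G e) = image_mset f' (ends G e)" if "e \<in> E G" for e
    using wfD(5)[OF assms(1) that] assms(3) by (intro multiset.map_cong0) auto
  show ?thesis using assms(2) unfolding graph_morph_def
    using bij_betw_cong[of "V G" f f' "V H"] bij_betw_cong[of "E G" g g' "E H"] assms(3,4) im
      wfD(6)[OF assms(1)]
    by (metis (no_types, lifting))
qed

lemma morph_inv:
  assumes w: "wf_graph G" and m: "graph_morph G H f g"
  shows "graph_morph H G (inv_into (V G) f) (inv_into (E G) g)"
proof -
  have bf: "bij_betw f (V G) (V H)" and bg: "bij_betw g (E G) (E H)"
    using m unfolding graph_morph_def by auto
  have bf': "bij_betw (inv_into (V G) f) (V H) (V G)" using bf by (rule bij_betw_inv_into)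
  have bg': "bij_betw (inv_into (E G) g) (E H) (E G)" using bg by (rule bij_betw_inv_into)
  have edges: "ety G (inv_into (E G) g e') = ety H e' \<and>
      ends G (inv_into (E G) g e') = image_mset (inv_into (V G) f) (ends H e')" if "e' \<in> E H" for e'
  proof -
    have "e' \<in> g ` E G" using that bg by (simp add: bij_betw_def)
    then obtain e where e: "e \<in> E G" "e' = g e" by blast
    have ie: "inv_into (E G) g e' = e" using e bg by (simp add: bij_betw_def)
    have "image_mset (inv_into (V G) f) (ends H e') = image_mset (inv_into (V G) f \<circ> f) (ends G e)"
      using m e unfolding graph_morph_def by (simp add: multiset.map_comp)
    also have "\<dots> = image_mset id (ends G e)"
      using wfD(5)[OF w e(1)] bf by (intro multiset.map_cong0) (auto simp: bij_betw_def)
    finally show ?thesis using ie m e unfolding graph_morph_def by simp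
  qed
  have ext: "xty G l = xty H l \<and> xv G l = inv_into (V G) f (xv H l)" if "l \<in> X H" for l
  proof -
    have l: "l \<in> X G" using that m unfolding graph_morph_def by simp
    then show ?thesis using m wfD(6)[OF w l] bf unfolding graph_morph_def bij_betw_def by simp
  qed
  show ?thesis unfolding graph_morph_def using bf' bg' edges ext m unfolding graph_morph_def by auto
qed

lemma iso_refl: "graph_iso G G" using morph_id unfolding graph_iso_def by blast

lemma iso_sym: "wf_graph G \<Longrightarrow> graph_iso G H \<Longrightarrow> graph_iso H G"
  unfolding graph_iso_def using morph_inv by blast

lemma iso_trans: "graph_iso G H \<Longrightarrow> graph_iso H K \<Longrightarrow> graph_iso G K"
  unfolding graph_iso_def using morph_comp by blast

lemma iso_class_eq:
  assumes "wf_graph G" "wf_graph H" "graph_iso G H"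
  shows "iso_class G = iso_class H"
  unfolding iso_class_def using assms iso_sym iso_trans by blast

lemma iso_class_eq_iff:
  assumes "wf_graph G" "wf_graph H"
  shows "iso_class G = iso_class H \<longleftrightarrow> graph_iso G H"
proof
  assume "iso_class G = iso_class H"
  moreover have "H \<in> iso_class H" using assms iso_refl unfolding iso_class_def by blast
  ultimately show "graph_iso G H" unfolding iso_class_def by blast
qed (use iso_class_eq assms in blast)

lemma rep_in: assumes "wf_graph G" shows "rep (iso_class G) \<in> iso_class G"
proof -
  have "G \<in> iso_class G" using assms iso_refl unfolding iso_class_def by blast
  then show ?thesis unfolding rep_def by (rule someI)
qed

lemma rep_wf: "wf_graph G \<Longrightarrow> wf_graph (rep (iso_class G))"
  using rep_in unfolding iso_class_def by blast

lemma rep_iso: "wf_graph G \<Longrightarrow> graph_iso G (rep (iso_class G))"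
  using rep_in unfolding iso_class_def by blast

lemma iso_class_rep: "wf_graph G \<Longrightarrow> iso_class (rep (iso_class G)) = iso_class G"
  using iso_class_eq rep_wf rep_iso by metis

section \<open>invariance\<close>

lemma morph_connected:
  assumes m: "graph_morph G H f g" and c: "connected_graph G"
  shows "connected_graph H"
proof -
  have bf: "bij_betw f (V G) (V H)" using m unfolding graph_morph_def by auto
  have h: "reach H (f x) (f y)" if "(x, y) \<in> adj G" for x y
  proof -
    have "\<exists>e\<in>E G. ends G e = {#x, y#}" using that by (simp add: adj_iff)
    then obtain e where "e \<in> E G" "ends G e = {#x, y#}" by blast
    then have "ends H (g e) = {#f x, f y#}" "g e \<in> E H" using m
      unfolding graph_morph_def bij_betw_def by auto
    then show ?thesis by (intro reach_adj) (auto simp: adj_iff)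
  qed
  show ?thesis unfolding connected_graph_def
  proof (intro conjI ballI)
    show "V H \<noteq> {}" using c bf unfolding connected_graph_def bij_betw_def by auto
  next
    fix u w assume "u \<in> V H" "w \<in> V H"
    then have "u \<in> f ` V G" "w \<in> f ` V G" using bf unfolding bij_betw_def by auto
    then obtain u0 w0 where "u0 \<in> V G" "w0 \<in> V G" "u = f u0" "w = f w0"
      by blast
    then show "reach H u w" using reach_hom[of G H f, OF h, of u0 w0] c connectedD by blast
  qed
qed

lemma morph_delete:
  assumes m: "graph_morph G H f g" and e: "e \<in> E G"
  shows "graph_morph (delete_edge G e) (delete_edge H (g e)) f g"
proof -
  have bg: "bij_betw g (E G) (E H)" using m unfolding graph_morph_def by auto
  have "bij_betw g (E G - {e}) (E H - {g e})"
    using bg e by (intro bij_betw_DiffI) (auto simp: bij_betw_def)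
  then show ?thesis using m unfolding graph_morph_def delete_edge_def by auto
qed

lemma morph_loops:
  assumes m: "graph_morph G H f g" and c: "connected_graph G"
  shows "loops H = loops G"
proof -
  have "card (V G) = card (V H)" "card (E G) = card (E H)"
    using m unfolding graph_morph_def by (auto intro: bij_betw_same_card)
  then show ?thesis using loops_connected c morph_connected[OF m c] by simp
qed

lemma morph_onePI:
  assumes m: "graph_morph G H f g" and p: "onePI G"
  shows "onePI H"
proof -
  have c: "connected_graph G" using p unfolding onePI_def by simp
  have bg: "bij_betw g (E G) (E H)" using m unfolding graph_morph_def by auto
  show ?thesis unfolding onePI_def
  proof (intro conjI ballI)
    show "connected_graph H" using morph_connected[OF m c] .
    show "\<not> is_tree H" using p morph_loops[OF m c] c unfolding onePI_def is_tree_def by simp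
  next
    fix e' assume "e' \<in> E H"
    then obtain e where e: "e \<in> E G" "e' = g e" using bg unfolding bij_betw_def by auto
    then show "connected_graph (delete_edge H e')"
      using morph_connected[OF morph_delete[OF m e(1)]] p unfolding onePI_def by simp
  qed
qed

lemma iso_props:
  assumes "graph_iso G H" "onePI G"
  shows "onePI H" "loops H = loops G" "X H = X G" "\<And>l. l \<in> X G \<Longrightarrow> xty H l = xty G l"
  using assms morph_onePI morph_loops unfolding graph_iso_def onePI_def graph_morph_def
  by metis+

definition isos :: "fgraph \<Rightarrow> fgraph \<Rightarrow> ((nat \<Rightarrow> nat) \<times> (nat \<Rightarrow> nat)) set" where
  "isos G H = {(f, g). graph_morph G H f g \<and> (\<forall>x. x \<notin> V G \<longrightarrow> f x = x)
                                        \<and> (\<forall>e. e \<notin> E G \<longrightarrow> g e = e)}"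

lemma Sym_isos: "Sym G = card (isos G G)"
  by (simp add: Sym_def Aut_def isos_def)

definition rid :: "nat set \<Rightarrow> (nat \<Rightarrow> nat) \<Rightarrow> nat \<Rightarrow> nat" where
  "rid A h = (\<lambda>x. if x \<in> A then h x else x)"

lemma rid_in_isos:
  assumes "wf_graph G" "graph_morph G H f g"
  shows "(rid (V G) f, rid (E G) g) \<in> isos G H"
  using morph_cong[OF assms, of "rid (V G) f" "rid (E G) g"] unfolding isos_def rid_def by auto

lemma isosD: "(f, g) \<in> isos G H \<Longrightarrow> graph_morph G H f g"
  "(f, g) \<in> isos G H \<Longrightarrow> x \<notin> V G \<Longrightarrow> f x = x"
  "(f, g) \<in> isos G H \<Longrightarrow> e \<notin> E G \<Longrightarrow> g e = e"
  by (auto simp: isos_def)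

lemma morph_bij: "graph_morph G H f g \<Longrightarrow> bij_betw f (V G) (V H)"
  "graph_morph G H f g \<Longrightarrow> bij_betw g (E G) (E H)"
  by (auto simp: graph_morph_def)

lemma card_isos_left:
  assumes wG: "wf_graph G" and wH: "wf_graph H" and m: "graph_morph G H f g"
  shows "card (isos H K) = card (isos G K)"
proof -
  define fi where "fi = inv_into (V G) f"
  define gi where "gi = inv_into (E G) g"
  have mi: "graph_morph H G fi gi" unfolding fi_def gi_def by (rule morph_inv[OF wG m])
  have bf: "bij_betw f (V G) (V H)" and bg: "bij_betw g (E G) (E H)" using morph_bij[OF m] by auto
  define \<phi> where "\<phi> = (\<lambda>(f'::nat\<Rightarrow>nat, g'::nat\<Rightarrow>nat). (rid (V G) (f' \<circ> f), rid (E G) (g' \<circ> g)))"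
  define \<psi> where "\<psi> = (\<lambda>(f'::nat\<Rightarrow>nat, g'::nat\<Rightarrow>nat). (rid (V H) (f' \<circ> fi), rid (E H) (g' \<circ> gi)))"
  have "bij_betw \<phi> (isos H K) (isos G K)"
  proof (rule bij_betw_byWitness[where f'=\<psi>])
    show "\<forall>a\<in>isos H K. \<psi> (\<phi> a) = a"
    proof
      fix a assume a: "a \<in> isos H K"
      obtain f' g' where [simp]: "a = (f', g')" by fastforce
      have 1: "rid (V H) (rid (V G) (f' \<circ> f) \<circ> fi) = f'"
      proof
        fix x show "rid (V H) (rid (V G) (f' \<circ> f) \<circ> fi) x = f' x"
          using a bf isosD(2)[of f' g' H K x] unfolding rid_def fi_def
          by (auto simp: bij_betw_def inv_into_into f_inv_into_f)
      qed
      have 2: "rid (E H) (rid (E G) (g' \<circ> g) \<circ> gi) = g'"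
      proof
        fix x show "rid (E H) (rid (E G) (g' \<circ> g) \<circ> gi) x = g' x"
          using a bg isosD(3)[of f' g' H K x] unfolding rid_def gi_def
          by (auto simp: bij_betw_def inv_into_into f_inv_into_f)
      qed
      show "\<psi> (\<phi> a) = a" using 1 2 by (simp add: \<phi>_def \<psi>_def)
    qed
    show "\<forall>a\<in>isos G K. \<phi> (\<psi> a) = a"
    proof
      fix a assume a: "a \<in> isos G K"
      obtain f' g' where [simp]: "a = (f', g')" by fastforce
      have 1: "rid (V G) (rid (V H) (f' \<circ> fi) \<circ> f) = f'"
      proof
        fix x show "rid (V G) (rid (V H) (f' \<circ> fi) \<circ> f) x = f' x"
          using a bf isosD(2)[of f' g' G K x] unfolding rid_def fi_def
          by (auto simp: bij_betw_def)
      qed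
      have 2: "rid (E G) (rid (E H) (g' \<circ> gi) \<circ> g) = g'"
      proof
        fix x show "rid (E G) (rid (E H) (g' \<circ> gi) \<circ> g) x = g' x"
          using a bg isosD(3)[of f' g' G K x] unfolding rid_def gi_def
          by (auto simp: bij_betw_def)
      qed
      show "\<phi> (\<psi> a) = a" using 1 2 by (simp add: \<phi>_def \<psi>_def)
    qed
    show "\<phi> ` isos H K \<subseteq> isos G K"
    proof
      fix b assume "b \<in> \<phi> ` isos H K"
      then obtain f' g' where a: "(f', g') \<in> isos H K" and b: "b = \<phi> (f', g')" by auto
      show "b \<in> isos G K" unfolding b \<phi>_def
        using rid_in_isos[OF wG morph_comp[OF m isosD(1)[OF a]]] by simp
    qed
    show "\<psi> ` isos G K \<subseteq> isos H K"
    proof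
      fix b assume "b \<in> \<psi> ` isos G K"
      then obtain f' g' where a: "(f', g') \<in> isos G K" and b: "b = \<psi> (f', g')" by auto
      show "b \<in> isos H K" unfolding b \<psi>_def
        using rid_in_isos[OF wH morph_comp[OF mi isosD(1)[OF a]]] by simp
    qed
  qed
  then show ?thesis by (rule bij_betw_same_card)
qed

lemma card_isos_right:
  assumes wG: "wf_graph G" and wH: "wf_graph H" and m: "graph_morph H K f g"
  shows "card (isos G H) = card (isos G K)"
proof -
  define fi where "fi = inv_into (V H) f"
  define gi where "gi = inv_into (E H) g"
  have mi: "graph_morph K H fi gi" unfolding fi_def gi_def by (rule morph_inv[OF wH m])
  have bf: "bij_betw f (V H) (V K)" and bg: "bij_betw g (E H) (E K)" using morph_bij[OF m] by auto
  define \<phi> where "\<phi> = (\<lambda>(f'::nat\<Rightarrow>nat, g'::nat\<Rightarrow>nat). (rid (V G) (f \<circ> f'), rid (E G) (g \<circ> g')))"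
  define \<psi> where "\<psi> = (\<lambda>(f'::nat\<Rightarrow>nat, g'::nat\<Rightarrow>nat). (rid (V G) (fi \<circ> f'), rid (E G) (gi \<circ> g')))"
  have "bij_betw \<phi> (isos G H) (isos G K)"
  proof (rule bij_betw_byWitness[where f'=\<psi>])
    show "\<forall>a\<in>isos G H. \<psi> (\<phi> a) = a"
    proof
      fix a assume a: "a \<in> isos G H"
      obtain f' g' where [simp]: "a = (f', g')" by fastforce
      have bf': "bij_betw f' (V G) (V H)" and bg': "bij_betw g' (E G) (E H)"
        using morph_bij[OF isosD(1)[OF a[simplified]]] by auto
      have 1: "rid (V G) (fi \<circ> rid (V G) (f \<circ> f')) = f'"
      proof
        fix x show "rid (V G) (fi \<circ> rid (V G) (f \<circ> f')) x = f' x"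
          using a bf bf' isosD(2)[of f' g' G H x] unfolding rid_def fi_def
          by (auto simp: bij_betw_def intro!: inv_into_f_f)
      qed
      have 2: "rid (E G) (gi \<circ> rid (E G) (g \<circ> g')) = g'"
      proof
        fix x show "rid (E G) (gi \<circ> rid (E G) (g \<circ> g')) x = g' x"
          using a bg bg' isosD(3)[of f' g' G H x] unfolding rid_def gi_def
          by (auto simp: bij_betw_def intro!: inv_into_f_f)
      qed
      show "\<psi> (\<phi> a) = a" using 1 2 by (simp add: \<phi>_def \<psi>_def)
    qed
    show "\<forall>a\<in>isos G K. \<phi> (\<psi> a) = a"
    proof
      fix a assume a: "a \<in> isos G K"
      obtain f' g' where [simp]: "a = (f', g')" by fastforce
      have bf': "bij_betw f' (V G) (V K)" and bg': "bij_betw g' (E G) (E K)"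
        using morph_bij[OF isosD(1)[OF a[simplified]]] by auto
      have 1: "rid (V G) (f \<circ> rid (V G) (fi \<circ> f')) = f'"
      proof
        fix x show "rid (V G) (f \<circ> rid (V G) (fi \<circ> f')) x = f' x"
          using a bf bf' isosD(2)[of f' g' G K x] unfolding rid_def fi_def
          by (auto simp: bij_betw_def intro!: f_inv_into_f)
      qed
      have 2: "rid (E G) (g \<circ> rid (E G) (gi \<circ> g')) = g'"
      proof
        fix x show "rid (E G) (g \<circ> rid (E G) (gi \<circ> g')) x = g' x"
          using a bg bg' isosD(3)[of f' g' G K x] unfolding rid_def gi_def
          by (auto simp: bij_betw_def intro!: f_inv_into_f)
      qed
      show "\<phi> (\<psi> a) = a" using 1 2 by (simp add: \<phi>_def \<psi>_def)
    qed
    show "\<phi> ` isos G H \<subseteq> isos G K"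
    proof
      fix b assume "b \<in> \<phi> ` isos G H"
      then obtain f' g' where a: "(f', g') \<in> isos G H" and b: "b = \<phi> (f', g')" by auto
      show "b \<in> isos G K" unfolding b \<phi>_def
        using rid_in_isos[OF wG morph_comp[OF isosD(1)[OF a] m]] by simp
    qed
    show "\<psi> ` isos G K \<subseteq> isos G H"
    proof
      fix b assume "b \<in> \<psi> ` isos G K"
      then obtain f' g' where a: "(f', g') \<in> isos G K" and b: "b = \<psi> (f', g')" by auto
      show "b \<in> isos G H" unfolding b \<psi>_def
        using rid_in_isos[OF wG morph_comp[OF isosD(1)[OF a] mi]] by simp
    qed
  qed
  then show ?thesis by (rule bij_betw_same_card)
qed

lemma finite_isos:
  assumes "finite (V G)" "finite (E G)" "finite (V H)" "finite (E H)"
  shows "finite (isos G H)"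
proof -
  let ?h = "\<lambda>(f::nat\<Rightarrow>nat, g::nat\<Rightarrow>nat). (restrict f (V G), restrict g (E G))"
  let ?B = "(PiE (V G) (\<lambda>_. V H)) \<times> (PiE (E G) (\<lambda>_. E H))"
  have "inj_on ?h (isos G H)"
  proof (rule inj_onI)
    fix a b assume a: "a \<in> isos G H" and b: "b \<in> isos G H" and eq: "?h a = ?h b"
    obtain f g where [simp]: "a = (f, g)" by fastforce
    obtain f' g' where [simp]: "b = (f', g')" by fastforce
    have "f = f'"
    proof
      fix x show "f x = f' x"
        using a b eq isosD(2)[of f g G H x] isosD(2)[of f' g' G H x]
        by (cases "x \<in> V G") (auto dest: fun_cong[where x=x] simp: restrict_apply)
    qed
    moreover have "g = g'"
    proof
      fix x show "g x = g' x"
        using a b eq isosD(3)[of f g G H x] isosD(3)[of f' g' G H x]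
        by (cases "x \<in> E G") (auto dest: fun_cong[where x=x] simp: restrict_apply)
    qed
    ultimately show "a = b" by simp
  qed
  moreover have "?h ` isos G H \<subseteq> ?B"
  proof
    fix y assume "y \<in> ?h ` isos G H"
    then obtain f g where a: "(f, g) \<in> isos G H" and y: "y = ?h (f, g)" by auto
    have "bij_betw f (V G) (V H)" "bij_betw g (E G) (E H)" using morph_bij[OF isosD(1)[OF a]] by auto
    then show "y \<in> ?B" unfolding y by (auto simp: bij_betw_def)
  qed
  moreover have "finite ?B" using assms by (simp add: finite_PiE)
  ultimately show ?thesis using finite_imageD finite_subset by metis
qed

definition ins :: "fgraph \<Rightarrow> nat \<Rightarrow> nat \<Rightarrow> nat \<Rightarrow> nat \<Rightarrow> nat \<Rightarrow> fgraph" where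
  "ins G j a b w e' = G\<lparr> V := insert w (V G), E := insert e' (E G), ety := (ety G)(e' := El),
     ends := (ends G)(j := {#a, w#}, e' := {#w, b#}), X := insert 2 (X G),
     xty := (xty G)(2 := Ph), xv := (xv G)(2 := w) \<rparr>"

lemma ins_simps:
  "V (ins G j a b w e') = insert w (V G)"
  "E (ins G j a b w e') = insert e' (E G)"
  "ety (ins G j a b w e') = (ety G)(e' := El)"
  "ends (ins G j a b w e') = (ends G)(j := {#a, w#}, e' := {#w, b#})"
  "X (ins G j a b w e') = insert 2 (X G)"
  "xty (ins G j a b w e') = (xty G)(2 := Ph)"
  "xv (ins G j a b w e') = (xv G)(2 := w)"
  by (simp_all add: ins_def)

lemma fresh_notin: "finite A \<Longrightarrow> fresh A \<notin> A"
  unfolding fresh_def using Max_ge[of "insert 0 A"] by (metis Suc_n_not_le_n finite_insert insertI2)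

definition pa :: "fgraph \<Rightarrow> nat \<Rightarrow> nat" where "pa G j = (SOME a. a \<in># ends G j)"

lemma insert_photon_ins:
  assumes "wf_graph G" "j \<in> E G"
  obtains b where "ends G j = {#pa G j, b#}"
    "insert_photon G j = ins G j (pa G j) b (fresh (V G)) (fresh (E G))"
proof -
  have s: "size (ends G j) = 2" using wfD(4)[OF assms] .
  then have "ends G j \<noteq> {#}" by auto
  then have pin: "pa G j \<in># ends G j" unfolding pa_def by (metis multiset_nonemptyE someI)
  have "size (ends G j - {#pa G j#}) = 1" using s pin by (simp add: size_Diff_submset)
  then obtain b where b: "ends G j - {#pa G j#} = {#b#}" using size_1_singleton_mset by blast
  have e: "ends G j = {#pa G j, b#}" using pin b by (metis insert_DiffM)
  show ?thesis
    by (rule that[OF e]) (unfold insert_photon_def ins_def Let_def pa_def[symmetric], simp add: b)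
qed

lemma incid_sum:
  "finite (E G) \<Longrightarrow> incid G v t = (\<Sum>e\<in>E G. if ety G e = t then count (ends G e) v else 0)
     + card {l\<in>X G. xty G l = t \<and> xv G l = v}"
  by (simp add: incid_def sum.inter_filter)

lemma incid_ins_old:
  assumes fin: "finite (E G)" and j: "j \<in> E G" "ety G j = El" "ends G j = {#a, b#}"
    and e': "e' \<notin> E G" and two: "2 \<notin> X G" and vw: "v \<noteq> w"
  shows "incid (ins G j a b w e') v t = incid G v t"
proof -
  let ?G' = "ins G j a b w e'"
  define H where "H = (\<lambda>e. if ety G e = t then count (ends G e) v else 0)"
  define H' where "H' = (\<lambda>e. if ety ?G' e = t then count (ends ?G' e) v else 0)"
  have ne: "j \<noteq> e'" using j e' by auto
  have "(\<Sum>e\<in>E ?G'. H' e) = H' e' + (\<Sum>e\<in>E G. H' e)"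
    using fin e' by (simp add: ins_simps)
  also have "(\<Sum>e\<in>E G. H' e) = H' j + (\<Sum>e\<in>E G - {j}. H' e)"
    using fin j by (simp add: sum.remove)
  also have "(\<Sum>e\<in>E G - {j}. H' e) = (\<Sum>e\<in>E G - {j}. H e)"
    using e' by (intro sum.cong) (auto simp: H_def H'_def ins_simps)
  also have "H' e' + (H' j + (\<Sum>e\<in>E G - {j}. H e)) = H j + (\<Sum>e\<in>E G - {j}. H e)"
    using vw ne j by (auto simp: H_def H'_def ins_simps)
  also have "\<dots> = (\<Sum>e\<in>E G. H e)" using fin j by (simp add: sum.remove)
  finally have s: "(\<Sum>e\<in>E ?G'. H' e) = (\<Sum>e\<in>E G. H e)" .
  have x: "{l\<in>X ?G'. xty ?G' l = t \<and> xv ?G' l = v} = {l\<in>X G. xty G l = t \<and> xv G l = v}"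
    using vw two by (auto simp: ins_simps)
  have fin': "finite (E ?G')" using fin by (simp add: ins_simps)
  show ?thesis using incid_sum[OF fin, of v t] incid_sum[OF fin', of v t] s x
    unfolding H_def H'_def by simp
qed

lemma incid_ins_new:
  assumes wf: "wf_graph G" and j: "j \<in> E G" "ety G j = El" "ends G j = {#a, b#}"
    and e': "e' \<notin> E G" and two: "2 \<notin> X G" and w: "w \<notin> V G"
  shows "incid (ins G j a b w e') w t = (if t = El then 2 else 1)"
proof -
  let ?G' = "ins G j a b w e'"
  have fin: "finite (E G)" using wfD(2)[OF wf] .
  define H' where "H' = (\<lambda>e. if ety ?G' e = t then count (ends ?G' e) w else 0)"
  have ne: "j \<noteq> e'" using j e' by auto
  have ab: "a \<in> V G" "b \<in> V G" using wfD(5)[OF wf j(1)] j(3) by auto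
  have "(\<Sum>e\<in>E ?G'. H' e) = H' e' + (\<Sum>e\<in>E G. H' e)"
    using fin e' by (simp add: ins_simps)
  also have "(\<Sum>e\<in>E G. H' e) = H' j + (\<Sum>e\<in>E G - {j}. H' e)"
    using fin j by (simp add: sum.remove)
  also have "(\<Sum>e\<in>E G - {j}. H' e) = 0"
  proof (intro sum.neutral ballI)
    fix e assume e: "e \<in> E G - {j}"
    then have "w \<notin># ends G e" using wfD(5)[OF wf, of e] w by auto
    then show "H' e = 0" using e e' by (auto simp: H'_def ins_simps count_eq_zero_iff)
  qed
  finally have s: "(\<Sum>e\<in>E ?G'. H' e) = (if t = El then 2 else 0)"
    using ab w ne j by (auto simp: H'_def ins_simps)
  have x: "{l\<in>X ?G'. xty ?G' l = t \<and> xv ?G' l = w} = (if t = Ph then {2} else {})"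
    using w two wfD(6)[OF wf] by (auto simp: ins_simps)
  have fin': "finite (E ?G')" using fin by (simp add: ins_simps)
  have "incid ?G' w t = (\<Sum>e\<in>E ?G'. H' e) + card {l\<in>X ?G'. xty ?G' l = t \<and> xv ?G' l = w}"
    using incid_sum[OF fin', of w t] unfolding H'_def by simp
  then show ?thesis unfolding s x by (cases t) auto
qed

lemma doubleton_eq: "{#x, y#} = {#a, b#} \<longleftrightarrow> (x = a \<and> y = b) \<or> (x = b \<and> y = a)"
  by (auto simp: add_eq_conv_diff)

lemma connected_via_map:
  assumes c: "connected_graph H" and h: "\<And>x y. (x, y) \<in> adj H \<Longrightarrow> reach K (f x) (f y)"
    and ne: "V K \<noteq> {}" and s: "\<And>u. u \<in> V K \<Longrightarrow> \<exists>u'\<in>V H. reach K (f u') u"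
  shows "connected_graph K"
  unfolding connected_graph_def
proof (intro conjI ballI)
  show "V K \<noteq> {}" by (rule ne)
next
  fix u v assume u: "u \<in> V K" and v: "v \<in> V K"
  obtain u' where u': "u' \<in> V H" "reach K (f u') u" using s[OF u] by blast
  obtain v' where v': "v' \<in> V H" "reach K (f v') v" using s[OF v] by blast
  have "reach K (f u') (f v')" using reach_hom[of H K f, OF h] c u'(1) v'(1) connectedD by blast
  then show "reach K u v" using u'(2) v'(2) reach_sym reach_trans by blast
qed

lemma wf_ins:
  assumes wf: "wf_graph G" and j: "j \<in> E G" "ety G j = El" "ends G j = {#a, b#}"
    and e': "e' \<notin> E G" and two: "2 \<notin> X G" and w: "w \<notin> V G"
  shows "wf_graph (ins G j a b w e')"
proof -
  have ab: "a \<in> V G" "b \<in> V G" using wfD(5)[OF wf j(1)] j(3) by auto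
  have ne: "j \<noteq> e'" using j e' by auto
  have inc: "incid (ins G j a b w e') v El = 2 \<and> incid (ins G j a b w e') v Ph = 1"
    if "v \<in> V (ins G j a b w e')" for v
  proof (cases "v = w")
    case True then show ?thesis using incid_ins_new[OF wf j e' two w] by simp
  next
    case False
    then have "v \<in> V G" using that by (simp add: ins_simps)
    then show ?thesis using incid_ins_old[OF wfD(2)[OF wf] j e' two False] wfD(7,8)[OF wf] by simp
  qed
  show ?thesis unfolding wf_graph_def
    using wfD[OF wf] inc ab ne by (auto simp: ins_simps)
qed

lemma wf_from_ins:
  assumes wf: "wf_graph (ins G j a b w e')" and j: "j \<in> E G" "ety G j = El" "ends G j = {#a, b#}"
    and e': "e' \<notin> E G" and two: "2 \<notin> X G" and w: "w \<notin> V G" and aw: "a \<noteq> w" "b \<noteq> w"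
    and only: "\<And>e. e \<in> E G \<Longrightarrow> e \<noteq> j \<Longrightarrow> w \<notin># ends G e"
    and xw: "\<And>l. l \<in> X G \<Longrightarrow> xv G l \<noteq> w"
  shows "wf_graph G"
proof -
  let ?G' = "ins G j a b w e'"
  have ne: "j \<noteq> e'" using j e' by auto
  have finE: "finite (E G)" using wfD(2)[OF wf] by (simp add: ins_simps)
  have a: "a \<in> V G" using wfD(5)[OF wf, of j] j aw ne by (auto simp: ins_simps)
  have b: "b \<in> V G" using wfD(5)[OF wf, of e'] ne aw by (auto simp: ins_simps)
  have edges: "size (ends G e) = 2 \<and> set_mset (ends G e) \<subseteq> V G" if "e \<in> E G" for e
  proof (cases "e = j")
    case True then show ?thesis using a b j by simp
  next
    case False
    have "e \<noteq> e'" using that e' by auto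
    then have "size (ends G e) = 2" "set_mset (ends G e) \<subseteq> insert w (V G)"
      using wfD(4,5)[OF wf, of e] that False by (auto simp: ins_simps)
    then show ?thesis using only[OF that False] by auto
  qed
  have ext: "xv G l \<in> V G" if "l \<in> X G" for l
  proof -
    have "l \<noteq> 2" using that two by auto
    then show ?thesis using wfD(6)[OF wf, of l] that xw[OF that] by (auto simp: ins_simps)
  qed
  have inc: "incid G v El = 2 \<and> incid G v Ph = 1" if "v \<in> V G" for v
  proof -
    have vw: "v \<noteq> w" using that w by auto
    show ?thesis using incid_ins_old[OF finE j e' two vw] wfD(7,8)[OF wf, of v] that
      by (auto simp: ins_simps)
  qed
  show ?thesis unfolding wf_graph_def
    using wfD(1,3)[OF wf] finE edges ext inc by (auto simp: ins_simps)
qed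

lemma not_tree_loops: "connected_graph G \<Longrightarrow> \<not> is_tree G \<longleftrightarrow> loops G \<noteq> 0"
  by (simp add: is_tree_def)

lemma del_notin: assumes "e \<notin> E G" shows "delete_edge G e = G"
proof -
  have "E G - {e} = E G" using assms by auto
  then show ?thesis by (simp add: delete_edge_def)
qed

lemma wit: assumes "u = w \<or> u \<in> V G" "V H = V G" "x \<in> V G" "reach K x w"
  shows "\<exists>u'\<in>V H. reach K (id u') u"
proof (cases "u = w")
  case True then show ?thesis using assms by auto
next
  case False then show ?thesis using assms reach_refl[of K u] by auto
qed

lemma onePI_ins:
  assumes wf: "wf_graph G" and p: "onePI G" and j: "j \<in> E G" "ety G j = El" "ends G j = {#a, b#}"
    and e': "e' \<notin> E G" and two: "2 \<notin> X G" and w: "w \<notin> V G"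
  shows "onePI (ins G j a b w e')" "loops (ins G j a b w e') = loops G"
proof -
  let ?G' = "ins G j a b w e'"
  have ab: "a \<in> V G" "b \<in> V G" using wfD(5)[OF wf j(1)] j(3) by auto
  have ne: "j \<noteq> e'" using j e' by auto
  have c: "connected_graph G" using p unfolding onePI_def by simp
  have adjaw: "(a, w) \<in> adj (delete_edge ?G' e)" if "e \<noteq> j" for e
    unfolding adj_delete ins_simps by (rule bexI[of _ j]) (use that ne j in auto)
  have adjwb: "(w, b) \<in> adj (delete_edge ?G' e)" if "e \<noteq> e'" for e
    unfolding adj_delete ins_simps by (rule bexI[of _ e']) (use that ne j in auto)
  have Vd: "\<And>H e. V (delete_edge H e) = V H" by (simp add: delete_edge_def)
  have Vd': "u = w \<or> u \<in> V G" if "u \<in> V (delete_edge ?G' e)" for u e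
    using that by (simp add: Vd ins_simps)
  have lift: "reach (delete_edge ?G' e) x y"
    if tt: "(x, y) \<in> adj (delete_edge G e)" "e \<noteq> e'" for x y e
  proof -
    obtain e0 where e0: "e0 \<in> E G - {e}" "ends G e0 = {#x, y#}" using tt(1) by (auto simp: adj_delete)
    show ?thesis
    proof (cases "e0 = j")
      case False
      have "e0 \<noteq> e'" using e0 e' by auto
      have "(x, y) \<in> adj (delete_edge ?G' e)"
        unfolding adj_delete ins_simps by (rule bexI[of _ e0]) (use e0 False \<open>e0 \<noteq> e'\<close> in auto)
      then show ?thesis by (rule reach_adj)
    next
      case True
      then have ej: "e \<noteq> j" using e0 by auto
      have r: "reach (delete_edge ?G' e) a b"
        using reach_trans[OF reach_adj[OF adjaw[OF ej]] reach_adj[OF adjwb[OF tt(2)]]] .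
      have "{#x, y#} = {#a, b#}" using e0 True j(3) by simp
      then have "(x = a \<and> y = b) \<or> (x = b \<and> y = a)" by (simp only: doubleton_eq)
      then show ?thesis using r reach_sym by blast
    qed
  qed
  have conn: "connected_graph (delete_edge ?G' e)"
    if tt: "connected_graph (delete_edge G e)" "reach (delete_edge ?G' e) a w" "e \<noteq> e'" for e
  proof (rule connected_via_map[where f=id and H="delete_edge G e"])
    show "connected_graph (delete_edge G e)" by (rule tt(1))
    show "\<And>x y. (x, y) \<in> adj (delete_edge G e) \<Longrightarrow> reach (delete_edge ?G' e) (id x) (id y)"
      using lift tt(3) by simp
    show "V (delete_edge ?G' e) \<noteq> {}" by (simp add: Vd ins_simps)
    fix u assume "u \<in> V (delete_edge ?G' e)"
    then show "\<exists>u'\<in>V (delete_edge G e). reach (delete_edge ?G' e) (id u') u"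
      using wit[OF Vd' Vd ab(1) tt(2)] by blast
  qed
  define z where "z = fresh (insert e' (E G))"
  have z: "z \<notin> insert e' (E G)" unfolding z_def using fresh_notin[of "insert e' (E G)"] wfD(2)[OF wf] by simp
  have cG': "connected_graph ?G'"
  proof -
    have zz: "z \<noteq> e'" "z \<noteq> j" "z \<notin> E ?G'" "z \<notin> E G" using z j by (auto simp: ins_simps)
    have cz: "connected_graph (delete_edge G z)" using c del_notin[OF zz(4)] by simp
    have rz: "reach (delete_edge ?G' z) a w" using reach_adj[OF adjaw[OF zz(2)]] .
    have "connected_graph (delete_edge ?G' z)"
      using conn[OF cz rz zz(1)] .
    then show ?thesis using del_notin[OF zz(3)] by simp
  qed
  have loopsG': "loops ?G' = loops G"
    using loops_connected[OF c] loops_connected[OF cG'] wfD(1,2)[OF wf] w e'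
    by (simp add: ins_simps)
  show "loops ?G' = loops G" by (rule loopsG')
  show "onePI ?G'" unfolding onePI_def
  proof (intro conjI ballI)
    show "connected_graph ?G'" by (rule cG')
    show "\<not> is_tree ?G'" using p c cG' loopsG' unfolding onePI_def is_tree_def by simp
  next
    fix e assume "e \<in> E ?G'"
    then have "e = e' \<or> e = j \<or> (e \<in> E G \<and> e \<noteq> j \<and> e \<noteq> e')" using j by (auto simp: ins_simps)
    then show "connected_graph (delete_edge ?G' e)"
    proof (elim disjE conjE)
      assume ee: "e = e'"
      have cj: "connected_graph (delete_edge G j)" using p j unfolding onePI_def by simp
      show ?thesis unfolding ee
      proof (rule connected_via_map[where f=id and H="delete_edge G j"])
        show "connected_graph (delete_edge G j)" by (rule cj)
        show "V (delete_edge ?G' e') \<noteq> {}" by (simp add: Vd ins_simps)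
        fix x y assume "(x, y) \<in> adj (delete_edge G j)"
        then obtain e0 where e0: "e0 \<in> E G - {j}" "ends G e0 = {#x, y#}" by (auto simp: adj_delete)
        then have "e0 \<noteq> e'" using e' by auto
        have "(x, y) \<in> adj (delete_edge ?G' e')"
          unfolding adj_delete ins_simps by (rule bexI[of _ e0]) (use e0 \<open>e0 \<noteq> e'\<close> in auto)
        then show "reach (delete_edge ?G' e') (id x) (id y)" by (simp add: reach_adj)
      next
        fix u assume "u \<in> V (delete_edge ?G' e')"
        have "e' \<noteq> j" using ne by simp
        then have "reach (delete_edge ?G' e') a w" using adjaw reach_adj by blast
        then show "\<exists>u'\<in>V (delete_edge G j). reach (delete_edge ?G' e') (id u') u"
          using wit[OF Vd'[OF \<open>u \<in> _\<close>] Vd ab(1)] by blast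
      qed
    next
      assume ee: "e = j"
      have cj: "connected_graph (delete_edge G j)" using p j unfolding onePI_def by simp
      show ?thesis unfolding ee
      proof (rule connected_via_map[where f=id and H="delete_edge G j"])
        show "connected_graph (delete_edge G j)" by (rule cj)
        show "V (delete_edge ?G' j) \<noteq> {}" by (simp add: Vd ins_simps)
        fix x y assume "(x, y) \<in> adj (delete_edge G j)"
        then obtain e0 where e0: "e0 \<in> E G - {j}" "ends G e0 = {#x, y#}" by (auto simp: adj_delete)
        then have "e0 \<noteq> e'" using e' by auto
        have "(x, y) \<in> adj (delete_edge ?G' j)"
          unfolding adj_delete ins_simps by (rule bexI[of _ e0]) (use e0 \<open>e0 \<noteq> e'\<close> in auto)
        then show "reach (delete_edge ?G' j) (id x) (id y)" by (simp add: reach_adj)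
      next
        fix u assume "u \<in> V (delete_edge ?G' j)"
        have "reach (delete_edge ?G' j) w b" using adjwb ne reach_adj by blast
        then have "reach (delete_edge ?G' j) b w" by (rule reach_sym)
        then show "\<exists>u'\<in>V (delete_edge G j). reach (delete_edge ?G' j) (id u') u"
          using wit[OF Vd'[OF \<open>u \<in> _\<close>] Vd ab(2)] by blast
      qed
    next
      assume e: "e \<in> E G" "e \<noteq> j" "e \<noteq> e'"
      have "connected_graph (delete_edge G e)" using p e unfolding onePI_def by simp
      moreover have "reach (delete_edge ?G' e) a w" using adjaw[OF e(2)] reach_adj by blast
      ultimately show ?thesis using conn[of e] e by blast
    qed
  qed
qed

lemma onePI_from_ins:
  assumes p': "onePI (ins G j a b w e')" and j: "j \<in> E G" "ends G j = {#a, b#}"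
    and e': "e' \<notin> E G" and w: "w \<notin> V G" and aw: "a \<noteq> w" "b \<noteq> w" and ab: "a \<in> V G" "b \<in> V G"
    and only: "\<And>e. e \<in> E G \<Longrightarrow> e \<noteq> j \<Longrightarrow> w \<notin># ends G e"
    and finE: "finite (E G)" and finV: "finite (V G)"
  shows "onePI G" "loops G = loops (ins G j a b w e')"
proof -
  let ?G' = "ins G j a b w e'"
  have ne: "j \<noteq> e'" using j e' by auto
  have c': "connected_graph ?G'" using p' unfolding onePI_def by simp
  have Vd: "\<And>H e. V (delete_edge H e) = V H" by (simp add: delete_edge_def)
  have plain: "reach (delete_edge G e) (h x) (h y)"
    if tt: "e0 \<in> E G" "e0 \<noteq> j" "e0 \<noteq> e" "ends G e0 = {#x, y#}" "h w = c" "\<And>u. u \<noteq> w \<Longrightarrow> h u = u"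
    for e0 e x y h c
  proof -
    have "x \<noteq> w" "y \<noteq> w" using only[OF tt(1,2)] tt(4) by auto
    then have "h x = x" "h y = y" using tt(6) by auto
    moreover have "(x, y) \<in> adj (delete_edge G e)"
      unfolding adj_delete by (rule bexI[of _ e0]) (use tt in auto)
    ultimately show ?thesis by (simp add: reach_adj)
  qed
  have adjab: "(a, b) \<in> adj (delete_edge G e)" if "e \<noteq> j" for e
    unfolding adj_delete by (rule bexI[of _ j]) (use that j in auto)
  have lowa: "reach (delete_edge G e) ((id(w := a)) x) ((id(w := a)) y)"
    if xy: "(x, y) \<in> adj (delete_edge ?G' e)" and ej: "e \<noteq> j" for x y e
  proof -
    obtain e0 where e0: "e0 \<in> insert e' (E G) - {e}" "ends ?G' e0 = {#x, y#}"
      using xy unfolding adj_delete ins_simps by blast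
    consider "e0 = e'" | "e0 = j" | "e0 \<in> E G" "e0 \<noteq> j" "e0 \<noteq> e'" using e0 by blast
    then show ?thesis
    proof cases
      case 1
      then have "{#x, y#} = {#w, b#}" using e0 by (simp add: ins_simps)
      then have "(x = w \<and> y = b) \<or> (x = b \<and> y = w)" by (simp only: doubleton_eq)
      then show ?thesis using adjab[OF ej] aw reach_adj reach_sym by fastforce
    next
      case 2
      then have "{#x, y#} = {#a, w#}" using e0 ne by (simp add: ins_simps)
      then have "(x = a \<and> y = w) \<or> (x = w \<and> y = a)" by (simp only: doubleton_eq)
      then show ?thesis using aw reach_refl by fastforce
    next
      case 3
      then have "ends G e0 = {#x, y#}" using e0 by (simp add: ins_simps)
      then show ?thesis using plain[of e0 e x y "id(w := a)" a] 3 e0 by auto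
    qed
  qed
  have lowb: "reach (delete_edge G j) ((id(w := b)) x) ((id(w := b)) y)"
    if xy: "(x, y) \<in> adj (delete_edge ?G' j)" for x y
  proof -
    obtain e0 where e0: "e0 \<in> insert e' (E G) - {j}" "ends ?G' e0 = {#x, y#}"
      using xy unfolding adj_delete ins_simps by blast
    consider "e0 = e'" | "e0 \<in> E G" "e0 \<noteq> j" "e0 \<noteq> e'" using e0 by blast
    then show ?thesis
    proof cases
      case 1
      then have "{#x, y#} = {#w, b#}" using e0 by (simp add: ins_simps)
      then have "(x = w \<and> y = b) \<or> (x = b \<and> y = w)" by (simp only: doubleton_eq)
      then show ?thesis using aw reach_refl by fastforce
    next
      case 2
      then have "ends G e0 = {#x, y#}" using e0 by (simp add: ins_simps)
      then show ?thesis using plain[of e0 j x y "id(w := b)" b] 2 e0 by auto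
    qed
  qed
  have surj: "\<exists>u'\<in>V (delete_edge ?G' d). reach (delete_edge G e) (h u') u"
    if uu: "u \<in> V (delete_edge G e)" and hh: "\<And>u. u \<noteq> w \<Longrightarrow> h u = u" for u d e h
  proof -
    have "u \<in> V G" "u \<noteq> w" using uu w by (auto simp: Vd)
    then show ?thesis using hh reach_refl by (intro bexI[of _ u]) (auto simp: Vd ins_simps)
  qed
  have conn_a: "connected_graph (delete_edge G e)" if "connected_graph (delete_edge ?G' e)" "e \<noteq> j" for e
  proof (rule connected_via_map[OF that(1)])
    show "\<And>x y. (x, y) \<in> adj (delete_edge ?G' e) \<Longrightarrow> reach (delete_edge G e) ((id(w := a)) x) ((id(w := a)) y)"
      using lowa that(2) by blast
    show "V (delete_edge G e) \<noteq> {}" using ab by (auto simp: Vd)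
    show "\<And>u. u \<in> V (delete_edge G e) \<Longrightarrow> \<exists>u'\<in>V (delete_edge ?G' e). reach (delete_edge G e) ((id(w := a)) u') u"
      by (rule surj) auto
  qed
  define z where "z = fresh (insert e' (E G))"
  have z: "z \<notin> insert e' (E G)" unfolding z_def using fresh_notin[of "insert e' (E G)"] finE by simp
  have zz: "z \<noteq> j" "z \<notin> E ?G'" "z \<notin> E G" using z j by (auto simp: ins_simps)
  have cG: "connected_graph G"
    using conn_a[of z] zz del_notin[OF zz(2)] del_notin[OF zz(3)] c' by simp
  have loopsG: "loops G = loops ?G'"
    using loops_connected[OF cG] loops_connected[OF c'] finE finV w e'
    by (simp add: ins_simps)
  show "loops G = loops ?G'" by (rule loopsG)
  show "onePI G" unfolding onePI_def
  proof (intro conjI ballI)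
    show "connected_graph G" by (rule cG)
    show "\<not> is_tree G" using p' cG c' loopsG unfolding onePI_def is_tree_def by simp
  next
    fix e assume e: "e \<in> E G"
    have ce: "connected_graph (delete_edge ?G' e)" using p' e unfolding onePI_def by (simp add: ins_simps)
    show "connected_graph (delete_edge G e)"
    proof (cases "e = j")
      case False then show ?thesis using conn_a[OF ce] by simp
    next
      case True
      show ?thesis unfolding True
      proof (rule connected_via_map[OF ce[unfolded True]])
        show "\<And>x y. (x, y) \<in> adj (delete_edge ?G' j) \<Longrightarrow> reach (delete_edge G j) ((id(w := b)) x) ((id(w := b)) y)"
          using lowb by blast
        show "V (delete_edge G j) \<noteq> {}" using ab by (auto simp: Vd)
        show "\<And>u. u \<in> V (delete_edge G j) \<Longrightarrow> \<exists>u'\<in>V (delete_edge ?G' j). reach (delete_edge G j) ((id(w := b)) u') u"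
          by (rule surj) auto
      qed
    qed
  qed
qed

lemma conn_closed:
  assumes c: "connected_graph K"
    and cl: "\<And>e. e \<in> E K \<Longrightarrow> set_mset (ends K e) \<inter> S \<noteq> {} \<Longrightarrow> set_mset (ends K e) \<subseteq> S"
    and u: "u \<in> S" "u \<in> V K" and v: "v \<in> V K"
  shows "v \<in> S"
proof (rule reach_closed[of K S u v])
  fix x y assume "(x, y) \<in> adj K"
  then obtain e where e: "e \<in> E K" "ends K e = {#x, y#}" unfolding adj_iff by blast
  show "x \<in> S \<longleftrightarrow> y \<in> S" using cl[OF e(1)] e(2) by auto
next
  show "reach K u v" using c u(2) v by (rule connectedD)
qed (rule u(1))

lemma mset2_count1:
  assumes "size M = 2" "count M w = 1"
  obtains u where "M = {#w, u#}" "u \<noteq> w"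
proof -
  have w: "w \<in># M" using assms(2) by (simp add: count_inI)
  have "size (M - {#w#}) = 1" using assms(1) w by (simp add: size_Diff_submset)
  then obtain u where u: "M - {#w#} = {#u#}" using size_1_singleton_mset by blast
  have M: "M = {#w, u#}" using w u by (metis insert_DiffM)
  have "u \<noteq> w" using assms(2) M by auto
  then show ?thesis using that M by blast
qed

lemma mset2_count2:
  assumes "size M = 2" "count M w = 2"
  shows "M = {#w, w#}"
proof -
  have sub: "{#w, w#} \<subseteq># M" using assms(2) by (simp add: subseteq_mset_def)
  have "size (M - {#w, w#}) = 0" using assms(1) sub by (simp add: size_Diff_submset)
  then have "M - {#w, w#} = {#}" by simp
  then show ?thesis using sub by (metis subset_mset.diff_add add.right_neutral union_commute)
qed

lemma count_le_size: "count M x \<le> size M"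
  by (metis count_le_replicate_mset_subset_eq order_refl size_mset_mono size_replicate_mset)

definition es :: "fgraph \<Rightarrow> nat \<Rightarrow> etype \<Rightarrow> nat \<Rightarrow> nat" where
  "es D v t e = (if ety D e = t then count (ends D e) v else 0)"

lemma incid_es: "finite (E D) \<Longrightarrow> incid D v t = sum (es D v t) (E D) + card {l\<in>X D. xty D l = t \<and> xv D l = v}"
  unfolding es_def by (rule incid_sum)

lemma card_le1_cases: "finite A \<Longrightarrow> card A \<le> 1 \<Longrightarrow> A = {} \<or> (\<exists>x. A = {x})"
  by (metis One_nat_def card_1_singletonE card_eq_0_iff le_Suc_eq le_zero_eq)
lemma card_12_cases: "finite A \<Longrightarrow> card A \<le> 2 \<Longrightarrow> A \<noteq> {} \<Longrightarrow> card A = 1 \<or> card A = 2"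
  by (metis card_0_eq le_SucE le_zero_eq numeral_2_eq_2 One_nat_def)

lemma sum_sub_le: "finite A \<Longrightarrow> B \<subseteq> A \<Longrightarrow> sum (h :: _ \<Rightarrow> nat) B \<le> sum h A"
  by (rule sum_mono2) auto

lemma struct_v:
  assumes wf: "wf_graph D" and p: "onePI D" and r: "residue_v D"
  defines "w \<equiv> xv D 2"
  obtains e1 e2 a b where "e1 \<in> E D" "e2 \<in> E D" "e1 \<noteq> e2" "ety D e1 = El" "ety D e2 = El"
    "ends D e1 = {#w, a#}" "ends D e2 = {#w, b#}" "a \<noteq> w" "b \<noteq> w" "a \<noteq> b"
    "\<And>e. e \<in> E D \<Longrightarrow> w \<in># ends D e \<Longrightarrow> e = e1 \<or> e = e2"
    "xv D 0 \<noteq> w" "xv D 1 \<noteq> w"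
proof -
  have X: "X D = {0, 1, 2}" "xty D 0 = El" "xty D 1 = El" "xty D 2 = Ph"
    using r unfolding residue_v_def by auto
  have finE: "finite (E D)" using wfD(2)[OF wf] .
  have c: "connected_graph D" using p unfolding onePI_def by simp
  have lnz: "loops D \<noteq> 0" using p c unfolding onePI_def is_tree_def by simp
  have wV: "w \<in> V D" unfolding w_def using wfD(6)[OF wf, of 2] X by simp
  have xV: "xv D 0 \<in> V D" "xv D 1 \<in> V D" using wfD(6)[OF wf] X by auto
  have sz: "\<And>e. e \<in> E D \<Longrightarrow> size (ends D e) = 2" using wfD(4)[OF wf] .
  have sV: "\<And>e. e \<in> E D \<Longrightarrow> set_mset (ends D e) \<subseteq> V D" using wfD(5)[OF wf] .
  have xsPh: "card {l\<in>X D. xty D l = Ph \<and> xv D l = w} = 1"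
  proof -
    have "{l\<in>X D. xty D l = Ph \<and> xv D l = w} = {2}" using X unfolding w_def by auto
    then show ?thesis by simp
  qed
  have esPh: "sum (es D w Ph) (E D) = 0"
    using incid_es[OF finE, of w Ph] wfD(8)[OF wf wV] xsPh by simp
  have noPh: "\<And>e. e \<in> E D \<Longrightarrow> ety D e = Ph \<Longrightarrow> count (ends D e) w = 0"
    using esPh finE unfolding es_def by (simp add: sum_eq_0_iff) (metis)
  define Ew where "Ew = {e\<in>E D. w \<in># ends D e}"
  have finEw: "finite Ew" unfolding Ew_def using finE by simp
  have EwEl: "\<And>e. e \<in> Ew \<Longrightarrow> ety D e = El"
  proof -
    fix e assume e: "e \<in> Ew"
    show "ety D e = El"
    proof (cases "ety D e")
      case Ph then show ?thesis using noPh e unfolding Ew_def by (auto simp: count_eq_zero_iff)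
    qed simp
  qed
  have esEl: "sum (es D w El) (E D) = (\<Sum>e\<in>Ew. count (ends D e) w)"
  proof -
    have "sum (es D w El) (E D) = sum (es D w El) Ew"
      by (rule sum.mono_neutral_right[OF finE]) (auto simp: Ew_def es_def count_eq_zero_iff)
    also have "\<dots> = (\<Sum>e\<in>Ew. count (ends D e) w)"
      by (rule sum.cong) (auto simp: es_def EwEl)
    finally show ?thesis .
  qed
  define k where "k = card {l\<in>X D. xty D l = El \<and> xv D l = w}"
  have sum2: "(\<Sum>e\<in>Ew. count (ends D e) w) + k = 2"
    using incid_es[OF finE, of w El] wfD(7)[OF wf wV] esEl unfolding k_def by simp
  have cnt1: "\<And>e. e \<in> Ew \<Longrightarrow> 1 \<le> count (ends D e) w" unfolding Ew_def by auto
  have cardEw: "card Ew \<le> (\<Sum>e\<in>Ew. count (ends D e) w)"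
    using sum_mono[of Ew "\<lambda>_. 1::nat" "\<lambda>e. count (ends D e) w"] cnt1 by simp
  have k0: "k = 0"
  proof (rule ccontr)
    assume "k \<noteq> 0"
    then have le1: "(\<Sum>e\<in>Ew. count (ends D e) w) \<le> 1" using sum2 by simp
    then have "card Ew \<le> 1" using cardEw by simp
    then consider "Ew = {}" | e where "Ew = {e}" using card_le1_cases[OF finEw] by blast
    then show False
    proof cases
      case 1
      have VD: "\<And>v. v \<in> V D \<Longrightarrow> v \<in> {w}"
      proof (rule conn_closed[OF c _ _ wV])
        fix e assume e: "e \<in> E D" "set_mset (ends D e) \<inter> {w} \<noteq> {}"
        then have "e \<in> Ew" unfolding Ew_def by auto
        then show "set_mset (ends D e) \<subseteq> {w}" using 1 by simp
      qed simp
      have ED: "E D = {}"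
      proof (rule ccontr)
        assume "E D \<noteq> {}"
        then obtain e where e: "e \<in> E D" by blast
        then have "ends D e \<noteq> {#}" using sz[OF e] by auto
        then obtain x where "x \<in># ends D e" by blast
        then have "x = w" using sV[OF e] VD by auto
        then have "e \<in> Ew" unfolding Ew_def using e \<open>x \<in># ends D e\<close> by simp
        then show False using 1 by simp
      qed
      have VDw: "V D = {w}"
      proof
        show "V D \<subseteq> {w}" using VD by blast
        show "{w} \<subseteq> V D" using wV by simp
      qed
      have "loops D = int (card (E D)) - int (card (V D)) + 1" by (rule loops_connected[OF c])
      then have "loops D = 0" unfolding VDw ED by simp
      then show False using lnz by simp
    next
      case (2 e)
      have e: "e \<in> E D" "w \<in># ends D e" using 2 unfolding Ew_def by auto
      have "count (ends D e) w = 1" using le1 cnt1 2 by (simp add: le_antisym)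
      then obtain u where u: "ends D e = {#w, u#}" "u \<noteq> w" using mset2_count1[OF sz[OF e(1)]] by blast
      have uV: "u \<in> V D" using sV[OF e(1)] u by auto
      have cd: "connected_graph (delete_edge D e)" using p e unfolding onePI_def by simp
      have "u \<in> {w}"
      proof (rule conn_closed[OF cd])
        fix e0 assume e0: "e0 \<in> E (delete_edge D e)" "set_mset (ends (delete_edge D e) e0) \<inter> {w} \<noteq> {}"
        then have "e0 \<in> Ew" "e0 \<noteq> e" unfolding Ew_def by (auto simp: delete_edge_def)
        then show "set_mset (ends (delete_edge D e) e0) \<subseteq> {w}" using 2 by simp
      qed (use wV uV in \<open>auto simp: delete_edge_def\<close>)
      then show False using u by simp
    qed
  qed
  have x01: "xv D 0 \<noteq> w" "xv D 1 \<noteq> w"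
  proof -
    have fin: "finite {l\<in>X D. xty D l = El \<and> xv D l = w}" using X by simp
    show "xv D 0 \<noteq> w" using k0 X fin unfolding k_def by (auto simp: card_eq_0_iff)
    show "xv D 1 \<noteq> w" using k0 X fin unfolding k_def by (auto simp: card_eq_0_iff)
  qed
  have s2: "(\<Sum>e\<in>Ew. count (ends D e) w) = 2" using sum2 k0 by simp
  have "card Ew \<le> 2" using cardEw s2 by simp
  moreover have "Ew \<noteq> {}" using s2 by auto
  ultimately have "card Ew = 1 \<or> card Ew = 2" using card_12_cases[OF finEw] by blast
  then obtain e1 e2 where Ew2: "Ew = {e1, e2}" "e1 \<noteq> e2"
  proof (elim disjE)
    assume "card Ew = 1"
    then obtain e where e1: "Ew = {e}" by (rule card_1_singletonE)
    have e: "e \<in> E D" using e1 unfolding Ew_def by auto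
    have "count (ends D e) w = 2" using s2 e1 by simp
    then have ew: "ends D e = {#w, w#}" using mset2_count2[OF sz[OF e]] by simp
    have "xv D 0 \<in> {w}"
    proof (rule conn_closed[OF c _ _ wV xV(1)])
      fix e0 assume e0: "e0 \<in> E D" "set_mset (ends D e0) \<inter> {w} \<noteq> {}"
      then have "e0 \<in> Ew" unfolding Ew_def by auto
      then show "set_mset (ends D e0) \<subseteq> {w}" using e1 ew by simp
    qed simp
    then show ?thesis using x01 by simp
  next
    assume "card Ew = 2"
    then show ?thesis using that by (auto simp: card_2_iff)
  qed
  have e12: "e1 \<in> E D" "e2 \<in> E D" "w \<in># ends D e1" "w \<in># ends D e2" using Ew2 unfolding Ew_def by auto
  have "count (ends D e1) w + count (ends D e2) w = 2" using s2 Ew2 by simp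
  moreover have "1 \<le> count (ends D e1) w" "1 \<le> count (ends D e2) w" using cnt1 Ew2 by auto
  ultimately have c1: "count (ends D e1) w = 1" "count (ends D e2) w = 1" by linarith+
  obtain a where a: "ends D e1 = {#w, a#}" "a \<noteq> w" using mset2_count1[OF sz[OF e12(1)] c1(1)] by blast
  obtain b where b: "ends D e2 = {#w, b#}" "b \<noteq> w" using mset2_count1[OF sz[OF e12(2)] c1(2)] by blast
  have El12: "ety D e1 = El" "ety D e2 = El" using EwEl Ew2 by auto
  have onlyw: "\<And>e. e \<in> E D \<Longrightarrow> w \<in># ends D e \<Longrightarrow> e = e1 \<or> e = e2" using Ew2 unfolding Ew_def by auto
  have ab: "a \<noteq> b"
  proof
    assume ab: "a = b"
    have aV: "a \<in> V D" using sV[OF e12(1)] a by auto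
    have esa: "es D a El e1 + es D a El e2 = 2" using a b ab El12 by (simp add: es_def)
    have sub12: "es D a El e1 + es D a El e2 = sum (es D a El) {e1, e2}" using Ew2 by simp
    have inca: "sum (es D a El) (E D) + card {l\<in>X D. xty D l = El \<and> xv D l = a} = 2"
      using incid_es[OF finE, of a El] wfD(7)[OF wf aV] by simp
    have ge2: "2 \<le> sum (es D a El) (E D)"
      using esa sub12 sum_sub_le[OF finE, of "{e1, e2}" "es D a El"] e12 by simp
    have xsa: "card {l\<in>X D. xty D l = El \<and> xv D l = a} = 0" using inca ge2 by simp
    have x0a: "xv D 0 \<noteq> a" using xsa X by (auto simp: card_eq_0_iff)
    have onlyEl: "e0 = e1 \<or> e0 = e2" if e0: "e0 \<in> E D" "ety D e0 = El" "a \<in># ends D e0" for e0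
    proof (rule ccontr)
      assume n: "\<not> (e0 = e1 \<or> e0 = e2)"
      have "sum (es D a El) {e1, e2, e0} = es D a El e1 + es D a El e2 + es D a El e0"
        using n Ew2 by simp
      moreover have "1 \<le> es D a El e0" using e0 by (simp add: es_def)
      moreover have "sum (es D a El) {e1, e2, e0} \<le> sum (es D a El) (E D)"
        using sum_sub_le[OF finE, of "{e1, e2, e0}" "es D a El"] e12 e0 by simp
      ultimately show False using inca esa by simp
    qed
    have xsPa: "card {l\<in>X D. xty D l = Ph \<and> xv D l = a} = 0"
    proof -
      have E0: "{l\<in>X D. xty D l = Ph \<and> xv D l = a} = {}" using X a(2) ab unfolding w_def by auto
      show ?thesis by (simp only: E0 card.empty)
    qed
    have esPa: "sum (es D a Ph) (E D) = 1"
      using incid_es[OF finE, of a Ph] wfD(8)[OF wf aV] xsPa by simp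
    then obtain pp where pp: "pp \<in> E D" "es D a Ph pp \<noteq> 0"
      by (metis sum.neutral zero_neq_one)
    have ppPh: "ety D pp = Ph" "a \<in># ends D pp" using pp(2) by (auto simp: es_def split: if_splits)
    have onlyPh: "e0 = pp" if e0: "e0 \<in> E D" "ety D e0 = Ph" "a \<in># ends D e0" for e0
    proof (rule ccontr)
      assume n: "e0 \<noteq> pp"
      have "sum (es D a Ph) {pp, e0} = es D a Ph pp + es D a Ph e0" using n by simp
      moreover have "1 \<le> es D a Ph e0" "1 \<le> es D a Ph pp" using e0 ppPh by (auto simp: es_def)
      moreover have "sum (es D a Ph) {pp, e0} \<le> sum (es D a Ph) (E D)"
        using sum_sub_le[OF finE, of "{pp, e0}" "es D a Ph"] pp e0 by simp
      ultimately show False using esPa by simp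
    qed
    have cd: "connected_graph (delete_edge D pp)" using p pp unfolding onePI_def by simp
    have "xv D 0 \<in> {w, a}"
    proof (rule conn_closed[OF cd])
      fix e0 assume e0: "e0 \<in> E (delete_edge D pp)" "set_mset (ends (delete_edge D pp) e0) \<inter> {w, a} \<noteq> {}"
      then have e0': "e0 \<in> E D" "e0 \<noteq> pp" "w \<in># ends D e0 \<or> a \<in># ends D e0"
        by (auto simp: delete_edge_def)
      have "e0 = e1 \<or> e0 = e2"
      proof (cases "w \<in># ends D e0")
        case True then show ?thesis using onlyw e0'(1) by blast
      next
        case False
        then have ae: "a \<in># ends D e0" using e0'(3) by blast
        show ?thesis
        proof (cases "ety D e0")
          case El then show ?thesis using onlyEl e0'(1) ae by blast
        next
          case Ph then show ?thesis using onlyPh e0'(1,2) ae by blast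
        qed
      qed
      then show "set_mset (ends (delete_edge D pp) e0) \<subseteq> {w, a}" using a b ab
        by (auto simp: delete_edge_def)
    qed (use wV xV in \<open>auto simp: delete_edge_def\<close>)
    then show False using x01 x0a by simp
  qed
  show ?thesis using that[OF e12(1,2) Ew2(2) El12 a(1) b(1) a(2) b(2) ab onlyw x01] by blast
qed

lemma contract:
  assumes wf: "wf_graph D" and p: "onePI D" and r: "residue_v D"
  obtains C e1 a b e2 where "D = ins C e1 a b (xv D 2) e2" "wf_graph C" "onePI C" "loops C = loops D"
    "residue_el C" "e1 \<in> E C" "ety C e1 = El" "ends C e1 = {#a, b#}" "a \<noteq> b"
    "xv D 2 \<notin> V C" "e2 \<notin> E C" "2 \<notin> X C"
proof -
  define w where "w = xv D 2"
  obtain e1 e2 a b where s: "e1 \<in> E D" "e2 \<in> E D" "e1 \<noteq> e2" "ety D e1 = El" "ety D e2 = El"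
    "ends D e1 = {#w, a#}" "ends D e2 = {#w, b#}" "a \<noteq> w" "b \<noteq> w" "a \<noteq> b"
    "\<And>e. e \<in> E D \<Longrightarrow> w \<in># ends D e \<Longrightarrow> e = e1 \<or> e = e2"
    "xv D 0 \<noteq> w" "xv D 1 \<noteq> w"
    using struct_v[OF wf p r] unfolding w_def by blast
  have X: "X D = {0, 1, 2}" "xty D 0 = El" "xty D 1 = El" "xty D 2 = Ph"
    using r unfolding residue_v_def by auto
  have wV: "w \<in> V D" unfolding w_def using wfD(6)[OF wf, of 2] X by simp
  have aV: "a \<in> V D" "b \<in> V D" using wfD(5)[OF wf s(1)] wfD(5)[OF wf s(2)] s(6,7) by auto
  define C where "C = D\<lparr>V := V D - {w}, E := E D - {e2}, ends := (ends D)(e1 := {#a, b#}), X := X D - {2}\<rparr>"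
  have CV: "V C = V D - {w}" and CE: "E C = E D - {e2}" and Cends: "ends C = (ends D)(e1 := {#a, b#})"
    and CX: "X C = X D - {2}" and Cety: "ety C = ety D" and Cxty: "xty C = xty D" and Cxv: "xv C = xv D"
    unfolding C_def by simp_all
  have f1: "insert w (V D - {w}) = V D" using wV by auto
  have f2: "insert e2 (E D - {e2}) = E D" using s(2) by auto
  have f3: "(ety D)(e2 := El) = ety D" using s(5) by auto
  have f4: "(ends D)(e1 := {#a, b#}, e1 := {#a, w#}, e2 := {#w, b#}) = ends D"
    using s(3,6,7) by (auto simp: add_mset_commute)
  have f5: "insert 2 (X D - {2}) = X D" using X by auto
  have f6: "(xty D)(2 := Ph) = xty D" using X by auto
  have f7: "(xv D)(2 := w) = xv D" unfolding w_def by auto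
  have DC: "D = ins C e1 a b w e2"
    unfolding ins_def C_def using f1 f2 f3 f4 f5 f6 f7 by simp
  have e1C: "e1 \<in> E C" "e2 \<notin> E C" "2 \<notin> X C" "w \<notin> V C" using s(1,3) by (auto simp: CE CX CV)
  have ends1: "ends C e1 = {#a, b#}" by (simp add: Cends)
  have ety1: "ety C e1 = El" using s(4) by (simp add: Cety)
  have only: "\<And>e. e \<in> E C \<Longrightarrow> e \<noteq> e1 \<Longrightarrow> w \<notin># ends C e"
    using s(11) by (auto simp: CE Cends)
  have xw: "\<And>l. l \<in> X C \<Longrightarrow> xv C l \<noteq> w" using s(12,13) X by (auto simp: CX Cxv)
  have wfC: "wf_graph C"
    by (rule wf_from_ins[where G=C and j=e1 and a=a and b=b and w=w and e'=e2]) (use wf DC e1C ends1 ety1 s(8,9) only xw in simp_all)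
  have abC: "a \<in> V C" "b \<in> V C" using aV s(8,9) by (auto simp: CV)
  have pC: "onePI C" "loops C = loops (ins C e1 a b w e2)"
    using onePI_from_ins[where G=C and j=e1 and a=a and b=b and w=w and e'=e2] p DC e1C ends1
      s(8,9) abC only wfD(1,2)[OF wfC] by simp_all
  have rC: "residue_el C" using X unfolding residue_el_def by (auto simp: CX Cxty)
  show ?thesis
    by (rule that[of C e1 a b e2]) (use DC wfC pC rC e1C ends1 ety1 s(10) in \<open>simp_all add: w_def\<close>)
qed

lemma restrict_morph:
  assumes wfG: "wf_graph G" and jG: "j \<in> E G" "ends G j = {#aj, bj#}" and wj: "wj \<notin> V G"
    and ej: "ej \<notin> E G" and twoG: "2 \<notin> X G"
    and wfC: "wf_graph C" and e1C: "e1 \<in> E C" "ety C e1 = El" "ends C e1 = {#a, b#}"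
    and w: "w \<notin> V C" and e2: "e2 \<notin> E C" and twoC: "2 \<notin> X C"
    and m: "graph_morph (ins G j aj bj wj ej) (ins C e1 a b w e2) f g"
  shows "graph_morph G C f (g(j := e1))" "f wj = w"
    "(g j = e1 \<and> g ej = e2 \<and> f aj = a \<and> f bj = b) \<or> (g j = e2 \<and> g ej = e1 \<and> f aj = b \<and> f bj = a)"
proof -
  let ?G' = "ins G j aj bj wj ej" and ?C' = "ins C e1 a b w e2"
  have bf: "bij_betw f (insert wj (V G)) (insert w (V C))"
    using morph_bij(1)[OF m] by (simp add: ins_simps)
  have bg: "bij_betw g (insert ej (E G)) (insert e2 (E C))"
    using morph_bij(2)[OF m] by (simp add: ins_simps)
  have edge0: "\<forall>e\<in>E ?G'. ety ?C' (g e) = ety ?G' e \<and> ends ?C' (g e) = image_mset f (ends ?G' e)"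
    using m unfolding graph_morph_def by blast
  have edge: "ety ?C' (g e) = ety ?G' e \<and> ends ?C' (g e) = image_mset f (ends ?G' e)"
    if "e \<in> insert ej (E G)" for e using edge0 that unfolding ins_simps(2) by blast
  have ext0: "X ?C' = X ?G'" "\<forall>l\<in>X ?G'. xty ?C' l = xty ?G' l \<and> xv ?C' l = f (xv ?G' l)"
    using m unfolding graph_morph_def by blast+
  have ext: "X ?C' = X ?G'" "\<And>l. l \<in> insert 2 (X G) \<Longrightarrow> xty ?C' l = xty ?G' l \<and> xv ?C' l = f (xv ?G' l)"
    using ext0 unfolding ins_simps(5) by blast+
  have fw: "f wj = w" using ext(2)[of 2] by (simp add: ins_simps)
  show "f wj = w" by (rule fw)
  have abC: "a \<in> V C" "b \<in> V C" using wfD(5)[OF wfC e1C(1)] e1C(3) by auto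
  have abG: "aj \<in> V G" "bj \<in> V G" using wfD(5)[OF wfG jG(1)] jG(2) by auto
  have ne: "j \<noteq> ej" "e1 \<noteq> e2" using jG ej e1C e2 by auto
  have atw: "e \<in> {e1, e2}" if "e \<in> insert e2 (E C)" "w \<in># ends ?C' e" for e
  proof (rule ccontr)
    assume "e \<notin> {e1, e2}"
    then have "e \<in> E C" "ends ?C' e = ends C e" using that(1) by (auto simp: ins_simps)
    then show False using wfD(5)[OF wfC, of e] that(2) w by auto
  qed
  have gjE: "g j \<in> insert e2 (E C)" "g ej \<in> insert e2 (E C)"
    using bg jG(1) by (auto simp: bij_betw_def)
  have endsj: "ends ?C' (g j) = {#f aj, w#}" using edge[of j] jG(1) ne fw by (simp add: ins_simps)
  have endsej: "ends ?C' (g ej) = {#w, f bj#}" using edge[of ej] fw by (simp add: ins_simps)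
  have gj: "g j \<in> {e1, e2}" using atw[OF gjE(1)] endsj by simp
  have gej: "g ej \<in> {e1, e2}" using atw[OF gjE(2)] endsej by simp
  have gne: "g j \<noteq> g ej" using bg ne jG(1) unfolding bij_betw_def inj_on_def by blast
  have C'1: "ends ?C' e1 = {#a, w#}" and C'2: "ends ?C' e2 = {#w, b#}" using ne by (auto simp: ins_simps)
  have aw: "a \<noteq> w" "b \<noteq> w" using abC w by auto
  have cases: "(g j = e1 \<and> g ej = e2 \<and> f aj = a \<and> f bj = b) \<or> (g j = e2 \<and> g ej = e1 \<and> f aj = b \<and> f bj = a)"
  proof (cases "g j = e1")
    case True
    then have g2: "g ej = e2" using gej gne by auto
    have "{#a, w#} = {#f aj, w#}" using endsj True C'1 by simp
    then have "f aj = a" using aw by (auto simp: doubleton_eq)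
    moreover have "{#w, b#} = {#w, f bj#}" using endsej g2 C'2 by simp
    then have "f bj = b" using aw by (auto simp: doubleton_eq)
    ultimately show ?thesis using True g2 by simp
  next
    case False
    then have g1: "g j = e2" "g ej = e1" using gj gej gne by auto
    have "{#w, b#} = {#f aj, w#}" using endsj g1 C'2 by simp
    then have "f aj = b" using aw by (auto simp: doubleton_eq)
    moreover have "{#a, w#} = {#w, f bj#}" using endsej g1 C'1 by simp
    then have "f bj = a" using aw by (auto simp: doubleton_eq)
    ultimately show ?thesis using g1 by simp
  qed
  show "(g j = e1 \<and> g ej = e2 \<and> f aj = a \<and> f bj = b) \<or> (g j = e2 \<and> g ej = e1 \<and> f aj = b \<and> f bj = a)"
    by (rule cases)
  have fab: "{#f aj, f bj#} = {#a, b#}" using cases by (auto simp: add_mset_commute)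
  have gother: "g e \<notin> {e1, e2}" "g e \<in> E C" if "e \<in> E G" "e \<noteq> j" for e
  proof -
    have "e \<noteq> ej" using that ej by auto
    then have "g e \<noteq> g j" "g e \<noteq> g ej" using bg that jG(1) unfolding bij_betw_def inj_on_def by blast+
    then show "g e \<notin> {e1, e2}" using cases by auto
    moreover have "g e \<in> insert e2 (E C)" using bg that(1) by (auto simp: bij_betw_def)
    ultimately show "g e \<in> E C" by auto
  qed
  have bf': "bij_betw f (V G) (V C)"
  proof -
    have inj: "inj_on f (V G)" using bf by (auto simp: bij_betw_def inj_on_subset)
    have "f ` V G \<subseteq> V C"
    proof
      fix y assume "y \<in> f ` V G"
      then obtain x where x: "x \<in> V G" "y = f x" by blast
      have "y \<in> insert w (V C)" using bf x by (auto simp: bij_betw_def)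
      moreover have "y \<noteq> w" using bf x wj fw unfolding bij_betw_def inj_on_def by (metis insertCI)
      ultimately show "y \<in> V C" by simp
    qed
    moreover have "V C \<subseteq> f ` V G"
    proof
      fix y assume y: "y \<in> V C"
      then have "y \<in> f ` insert wj (V G)" using bf by (auto simp: bij_betw_def)
      then obtain x where x: "x \<in> insert wj (V G)" "y = f x" by blast
      have "x \<noteq> wj" using x y fw w by auto
      then show "y \<in> f ` V G" using x by auto
    qed
    ultimately show ?thesis using inj by (auto simp: bij_betw_def)
  qed
  have bg': "bij_betw (g(j := e1)) (E G) (E C)"
  proof -
    have inj: "inj_on (g(j := e1)) (E G)"
    proof (rule inj_onI)
      fix x y assume xy: "x \<in> E G" "y \<in> E G" "(g(j := e1)) x = (g(j := e1)) y"
      show "x = y"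
      proof (cases "x = j \<or> y = j")
        case True then show ?thesis using xy gother by (auto split: if_splits)
      next
        case False
        then have "g x = g y" using xy by simp
        then show ?thesis using bg xy(1,2) unfolding bij_betw_def inj_on_def by blast
      qed
    qed
    have "(g(j := e1)) ` E G \<subseteq> E C" using gother e1C(1) by auto
    moreover have "E C \<subseteq> (g(j := e1)) ` E G"
    proof
      fix y assume y: "y \<in> E C"
      show "y \<in> (g(j := e1)) ` E G"
      proof (cases "y = e1")
        case True then show ?thesis using jG(1) by (intro image_eqI[of _ _ j]) auto
      next
        case False
        have "y \<in> g ` insert ej (E G)" using bg y by (auto simp: bij_betw_def)
        then obtain x where x: "x \<in> insert ej (E G)" "y = g x" by blast
        have "y \<noteq> e2" using y e2 by auto
        then have "x \<noteq> j" "x \<noteq> ej" using x cases False by auto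
        then show ?thesis using x by (intro image_eqI[of _ _ x]) auto
      qed
    qed
    ultimately show ?thesis using inj by (auto simp: bij_betw_def)
  qed
  have XGC: "X C = X G"
  proof -
    have "insert 2 (X C) = insert 2 (X G)" using ext(1) by (simp add: ins_simps)
    then show ?thesis using Diff_insert_absorb[OF twoG] Diff_insert_absorb[OF twoC] by metis
  qed
  show "graph_morph G C f (g(j := e1))" unfolding graph_morph_def
  proof (intro conjI ballI)
    show "bij_betw f (V G) (V C)" by (rule bf')
    show "bij_betw (g(j := e1)) (E G) (E C)" by (rule bg')
    show "X C = X G" by (rule XGC)
  next
    fix e assume e: "e \<in> E G"
    show "ety C ((g(j := e1)) e) = ety G e"
    proof (cases "e = j")
      case True
      have "ety ?C' (g j) = ety G j" using edge[of j] jG(1) ne by (simp add: ins_simps)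
      moreover have "ety ?C' (g j) = El" using gj e1C(2) ne by (auto simp: ins_simps)
      ultimately show ?thesis using True e1C(2) by simp
    next
      case False
      have "ety ?C' (g e) = ety G e" using edge[of e] e ej by (auto simp: ins_simps)
      then show ?thesis using False gother[OF e False] by (simp add: ins_simps)
    qed
    show "ends C ((g(j := e1)) e) = image_mset f (ends G e)"
    proof (cases "e = j")
      case True then show ?thesis using e1C(3) jG(2) fab by simp
    next
      case False
      have "e \<noteq> ej" using e ej by auto
      then have "ends ?C' (g e) = image_mset f (ends G e)" using edge[of e] e False by (simp add: ins_simps)
      then show ?thesis using False gother[OF e False] by (simp add: ins_simps)
    qed
  next
    fix l assume l: "l \<in> X G"
    then have "l \<noteq> 2" using twoG by auto
    then show "xty C l = xty G l" "xv C l = f (xv G l)" using ext(2)[of l] l by (auto simp: ins_simps)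
  qed
qed

lemma extend_morph:
  assumes wfG: "wf_graph G" and jG: "j \<in> E G" "ends G j = {#aj, bj#}" and wj: "wj \<notin> V G"
    and ej: "ej \<notin> E G" and twoG: "2 \<notin> X G"
    and wfC: "wf_graph C" and e1C: "e1 \<in> E C" "ety C e1 = El" "ends C e1 = {#a, b#}"
    and w: "w \<notin> V C" and e2: "e2 \<notin> E C" and twoC: "2 \<notin> X C"
    and m: "graph_morph G C f g" and gj: "g j = e1"
  shows "graph_morph (ins G j aj bj wj ej) (ins C e1 a b w e2) (f(wj := w))
           (if f aj = a then g(ej := e2) else g(j := e2, ej := e1))"
proof -
  let ?G' = "ins G j aj bj wj ej" and ?C' = "ins C e1 a b w e2"
  define f' where "f' = f(wj := w)"
  define g' where "g' = (if f aj = a then g(ej := e2) else g(j := e2, ej := e1))"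
  have bf: "bij_betw f (V G) (V C)" and bg: "bij_betw g (E G) (E C)" using morph_bij[OF m] by auto
  have edge0: "\<forall>e\<in>E G. ety C (g e) = ety G e \<and> ends C (g e) = image_mset f (ends G e)"
    using m unfolding graph_morph_def by blast
  have ext0: "X C = X G" "\<forall>l\<in>X G. xty C l = xty G l \<and> xv C l = f (xv G l)"
    using m unfolding graph_morph_def by blast+
  have abC: "a \<in> V C" "b \<in> V C" using wfD(5)[OF wfC e1C(1)] e1C(3) by auto
  have abG: "aj \<in> V G" "bj \<in> V G" using wfD(5)[OF wfG jG(1)] jG(2) by auto
  have ne: "j \<noteq> ej" "e1 \<noteq> e2" using jG ej e1C e2 by auto
  have fab: "{#f aj, f bj#} = {#a, b#}" using edge0 jG gj e1C(3) by auto
  then have fcases: "(f aj = a \<and> f bj = b) \<or> (f aj = b \<and> f bj = a)" by (simp only: doubleton_eq)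
  have etyj: "ety G j = El" using edge0 jG(1) gj e1C(2) by auto
  have f'V: "\<And>x. x \<in> V G \<Longrightarrow> f' x = f x" using wj unfolding f'_def by auto
  have fVC: "\<And>x. x \<in> V G \<Longrightarrow> f x \<in> V C" using bf by (auto simp: bij_betw_def)
  have gEC: "\<And>e. e \<in> E G \<Longrightarrow> g e \<in> E C" using bg by (auto simp: bij_betw_def)
  have g'E: "g' e = g e" if "e \<in> E G" "e \<noteq> j" for e using that ej unfolding g'_def by auto
  have gne1: "g e \<noteq> e1" if "e \<in> E G" "e \<noteq> j" for e
    using bg that jG(1) gj unfolding bij_betw_def inj_on_def by metis
  have bf': "bij_betw f' (V ?G') (V ?C')"
  proof -
    have "inj_on f' (insert wj (V G))"
    proof (rule inj_onI)
      fix x y assume xy: "x \<in> insert wj (V G)" "y \<in> insert wj (V G)" "f' x = f' y"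
      show "x = y"
      proof (cases "x = wj \<or> y = wj")
        case True then show ?thesis using xy f'V fVC w unfolding f'_def by (auto split: if_splits)
      next
        case False
        then have "f x = f y" "x \<in> V G" "y \<in> V G" using xy f'V by auto
        then show ?thesis using bf unfolding bij_betw_def inj_on_def by blast
      qed
    qed
    moreover have "f' ` insert wj (V G) = insert w (V C)"
    proof -
      have "f' ` V G = f ` V G" using f'V by (rule image_cong[OF refl])
      moreover have "f' wj = w" unfolding f'_def by simp
      moreover have "f ` V G = V C" using bf unfolding bij_betw_def by simp
      ultimately show ?thesis by (simp only: image_insert)
    qed
    ultimately show ?thesis by (simp add: bij_betw_def ins_simps)
  qed
  have bg': "bij_betw g' (E ?G') (E ?C')"
  proof -
    have img: "g' ` (E G - {j}) = E C - {e1}"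
    proof -
      have "g' ` (E G - {j}) = g ` (E G - {j})" using g'E by (intro image_cong) auto
      also have "\<dots> = g ` E G - g ` {j}" using bg jG(1) unfolding bij_betw_def
        by (intro inj_on_image_set_diff) auto
      also have "\<dots> = g ` E G - {g j}" by simp
      finally show ?thesis using bg gj by (simp add: bij_betw_def)
    qed
    have injr: "inj_on g' (E G - {j})"
      using bg g'E unfolding bij_betw_def inj_on_def by auto
    have vals: "g' j = (if f aj = a then e1 else e2)" "g' ej = (if f aj = a then e2 else e1)"
      using gj ne unfolding g'_def by auto
    have split: "insert ej (E G) = insert ej (insert j (E G - {j}))" using jG(1) by auto
    have jR: "j \<notin> E G - {j}" by simp
    have ejR: "ej \<notin> insert j (E G - {j})" using ej ne by auto
    have gjn: "g' j \<notin> g' ` (E G - {j})" unfolding img using vals(1) e2 by auto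
    have dd: "E G - {j} - {j} = E G - {j}" by auto
    have inj1: "inj_on g' (insert j (E G - {j}))"
      using inj_on_insert[of g' j "E G - {j}"] injr gjn unfolding dd by blast
    have gejn: "g' ej \<notin> g' ` insert j (E G - {j})"
      unfolding image_insert img using vals ne e2 by auto
    have dd2: "insert j (E G - {j}) - {ej} = insert j (E G - {j})" using ejR by blast
    have "inj_on g' (insert ej (insert j (E G - {j})))"
      using inj_on_insert[of g' ej "insert j (E G - {j})"] inj1 gejn dd2 by metis
    moreover have "g' ` insert ej (insert j (E G - {j})) = insert e2 (E C)"
      unfolding image_insert img vals using e1C(1) by (cases "f aj = a") auto
    ultimately show ?thesis using split by (simp add: bij_betw_def ins_simps)
  qed
  have XX: "X ?C' = X ?G'" using ext0 by (simp add: ins_simps)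
  have edges: "\<forall>e\<in>E ?G'. ety ?C' (g' e) = ety ?G' e \<and> ends ?C' (g' e) = image_mset f' (ends ?G' e)"
  proof
    fix e assume e: "e \<in> E ?G'"
    then consider "e = ej" | "e = j" | "e \<in> E G" "e \<noteq> j" "e \<noteq> ej" using jG(1) by (auto simp: ins_simps)
    then show "ety ?C' (g' e) = ety ?G' e \<and> ends ?C' (g' e) = image_mset f' (ends ?G' e)"
    proof cases
      case 1
      have "image_mset f' (ends ?G' e) = {#w, f bj#}" using 1 abG(2) f'V by (simp add: ins_simps f'_def)
      moreover have "ety ?G' e = El" using 1 by (simp add: ins_simps)
      moreover have "g' e = (if f aj = a then e2 else e1)" using 1 gj ne unfolding g'_def by auto
      ultimately show ?thesis using fcases ne e1C(2) by (auto simp: ins_simps add_mset_commute)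
    next
      case 2
      have "image_mset f' (ends ?G' e) = {#f aj, w#}" using 2 ne abG(1) f'V by (simp add: ins_simps f'_def)
      moreover have "ety ?G' e = El" using 2 ne etyj by (simp add: ins_simps)
      moreover have "g' e = (if f aj = a then e1 else e2)" using 2 gj ne unfolding g'_def by auto
      ultimately show ?thesis using fcases ne e1C(2) by (auto simp: ins_simps add_mset_commute)
    next
      case 3
      have ge: "g' e = g e" "g e \<noteq> e1" "g e \<noteq> e2" "g e \<in> E C" using g'E gne1 gEC 3 e2 by auto
      have im: "image_mset f' (ends G e) = image_mset f (ends G e)"
        using wfD(5)[OF wfG 3(1)] f'V by (intro multiset.map_cong0) auto
      show ?thesis using edge0 3 ge im by (simp add: ins_simps)
    qed
  qed
  have xs: "\<forall>l\<in>X ?G'. xty ?C' l = xty ?G' l \<and> xv ?C' l = f' (xv ?G' l)"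
  proof
    fix l assume l: "l \<in> X ?G'"
    show "xty ?C' l = xty ?G' l \<and> xv ?C' l = f' (xv ?G' l)"
    proof (cases "l = 2")
      case True then show ?thesis by (simp add: ins_simps f'_def)
    next
      case False
      then have "l \<in> X G" using l by (simp add: ins_simps)
      then show ?thesis using False ext0 f'V wfD(6)[OF wfG] by (simp add: ins_simps)
    qed
  qed
  show ?thesis unfolding f'_def[symmetric] g'_def[symmetric] graph_morph_def
    using bf' bg' XX edges xs by blast
qed

definition pbb :: "fgraph \<Rightarrow> nat \<Rightarrow> nat" where
  "pbb G j = (SOME b. ends G j = {#pa G j, b#})"

lemma insert_photon_ins':
  assumes "wf_graph G" "j \<in> E G"
  shows "ends G j = {#pa G j, pbb G j#}"
    "insert_photon G j = ins G j (pa G j) (pbb G j) (fresh (V G)) (fresh (E G))"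
proof -
  obtain b where b: "ends G j = {#pa G j, b#}"
    "insert_photon G j = ins G j (pa G j) b (fresh (V G)) (fresh (E G))"
    using insert_photon_ins[OF assms] by blast
  have "ends G j = {#pa G j, pbb G j#}" unfolding pbb_def using b(1) by (rule someI)
  then have "pbb G j = b" using b(1) by simp
  then show "ends G j = {#pa G j, pbb G j#}"
    "insert_photon G j = ins G j (pa G j) (pbb G j) (fresh (V G)) (fresh (E G))" using b by simp_all
qed

lemma fiber_count:
  assumes wfG: "wf_graph G" and twoG: "2 \<notin> X G"
    and wfC: "wf_graph C" and e1C: "e1 \<in> E C" "ety C e1 = El" "ends C e1 = {#a, b#}" and ab: "a \<noteq> b"
    and w: "w \<notin> V C" and e2: "e2 \<notin> E C" and twoC: "2 \<notin> X C"
    and D: "D = ins C e1 a b w e2" and wfDD: "wf_graph D" and iso: "graph_iso G C"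
  defines "Oj \<equiv> {j\<in>el_edges G. graph_iso (insert_photon G j) D}"
  shows "card Oj * Sym D = Sym G" "Oj \<noteq> {}" "finite Oj"
proof -
  define wG where "wG = fresh (V G)"
  define eG where "eG = fresh (E G)"
  have wG: "wG \<notin> V G" unfolding wG_def using fresh_notin wfD(1)[OF wfG] by simp
  have eG: "eG \<notin> E G" unfolding eG_def using fresh_notin wfD(2)[OF wfG] by simp
  define IP where "IP = (\<lambda>j. ins G j (pa G j) (pbb G j) wG eG)"
  have IPeq: "insert_photon G j = IP j" if "j \<in> E G" for j
    using insert_photon_ins'(2)[OF wfG that] unfolding IP_def wG_def eG_def by simp
  have endsj: "ends G j = {#pa G j, pbb G j#}" if "j \<in> E G" for j
    using insert_photon_ins'(1)[OF wfG that] .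
  have OE: "Oj \<subseteq> E G" unfolding Oj_def el_edges_def by auto
  have finO: "finite Oj" using OE wfD(2)[OF wfG] finite_subset by blast
  show "finite Oj" by (rule finO)
  have wfIP: "wf_graph (IP j)" if "j \<in> E G" "ety G j = El" for j
    unfolding IP_def by (rule wf_ins[OF wfG that endsj[OF that(1)] eG twoG wG])
  define P where "P = Sigma Oj (\<lambda>j. isos (IP j) D)"
  define R where "R = (\<lambda>(j::nat, f::nat\<Rightarrow>nat, g::nat\<Rightarrow>nat). (rid (V G) f, rid (E G) (g(j := e1))))"
  define Ext where "Ext = (\<lambda>(f::nat\<Rightarrow>nat, g::nat\<Rightarrow>nat).
     let j = inv_into (E G) g e1 in
       (j, rid (insert wG (V G)) (f(wG := w)),
           rid (insert eG (E G)) (if f (pa G j) = a then g(eG := e2) else g(j := e2, eG := e1))))"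
  have restr: "graph_morph G C f (g(j := e1)) \<and> f wG = w \<and>
      ((g j = e1 \<and> g eG = e2 \<and> f (pa G j) = a) \<or> (g j = e2 \<and> g eG = e1 \<and> f (pa G j) = b))"
    if "j \<in> E G" "graph_morph (IP j) D f g" for j f g
    using restrict_morph[OF wfG that(1) endsj[OF that(1)] wG eG twoG wfC e1C w e2 twoC] that(2)
    unfolding IP_def D by blast
  have bij: "bij_betw R P (isos G C)"
  proof (rule bij_betw_byWitness[where f'=Ext])
    show "\<forall>x\<in>P. Ext (R x) = x"
    proof
      fix x assume x: "x \<in> P"
      obtain j f g where xe: "x = (j, f, g)" by (cases x) auto
      have j: "j \<in> Oj" and fg: "(f, g) \<in> isos (IP j) D" using x unfolding P_def xe by auto
      have jE: "j \<in> E G" using j OE by auto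
      have m: "graph_morph (IP j) D f g" using isosD(1)[OF fg] .
      have rs: "graph_morph G C f (g(j := e1))" "f wG = w"
        "(g j = e1 \<and> g eG = e2 \<and> f (pa G j) = a) \<or> (g j = e2 \<and> g eG = e1 \<and> f (pa G j) = b)"
        using restr[OF jE m] by auto
      have VIP: "V (IP j) = insert wG (V G)" "E (IP j) = insert eG (E G)" unfolding IP_def by (simp_all add: ins_simps)
      have mr: "graph_morph G C (rid (V G) f) (rid (E G) (g(j := e1)))"
        using morph_cong[OF wfG rs(1)] unfolding rid_def by auto
      have inj: "inj_on (rid (E G) (g(j := e1))) (E G)" using morph_bij(2)[OF mr] by (simp add: bij_betw_def)
      have invj: "inv_into (E G) (rid (E G) (g(j := e1))) e1 = j"
        using inv_into_f_eq[OF inj jE] jE by (simp add: rid_def)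
      have paV: "pa G j \<in> V G" using wfD(5)[OF wfG jE] endsj[OF jE] by auto
      have f1: "rid (insert wG (V G)) ((rid (V G) f)(wG := w)) = f"
      proof
        fix y show "rid (insert wG (V G)) ((rid (V G) f)(wG := w)) y = f y"
          using isosD(2)[OF fg, of y] rs(2) wG VIP unfolding rid_def by auto
      qed
      have g1: "rid (insert eG (E G)) (if (rid (V G) f) (pa G j) = a
                  then (rid (E G) (g(j := e1)))(eG := e2)
                  else (rid (E G) (g(j := e1)))(j := e2, eG := e1)) = g"
      proof
        fix y
        have "(rid (V G) f) (pa G j) = f (pa G j)" using paV by (simp add: rid_def)
        then show "rid (insert eG (E G)) (if (rid (V G) f) (pa G j) = a
                  then (rid (E G) (g(j := e1)))(eG := e2)
                  else (rid (E G) (g(j := e1)))(j := e2, eG := e1)) y = g y"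
          using isosD(3)[OF fg, of y] rs(3) ab eG jE VIP unfolding rid_def by auto
      qed
      show "Ext (R x) = x" unfolding xe R_def Ext_def by (simp only: prod.case Let_def invj f1 g1)
    qed
    show "\<forall>y\<in>isos G C. R (Ext y) = y"
    proof
      fix y assume y: "y \<in> isos G C"
      obtain f g where ye: "y = (f, g)" by (cases y) auto
      have fg: "(f, g) \<in> isos G C" using y ye by simp
      have m: "graph_morph G C f g" using isosD(1)[OF fg] .
      have bg: "bij_betw g (E G) (E C)" using morph_bij(2)[OF m] .
      define j where "j = inv_into (E G) g e1"
      have jE: "j \<in> E G" unfolding j_def using bg e1C(1) by (metis bij_betw_def inv_into_into)
      have gj: "g j = e1" unfolding j_def using bg e1C(1) by (metis bij_betw_def f_inv_into_f)
      have f1: "rid (V G) (rid (insert wG (V G)) (f(wG := w))) = f"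
      proof
        fix x show "rid (V G) (rid (insert wG (V G)) (f(wG := w))) x = f x"
          using isosD(2)[OF fg, of x] wG unfolding rid_def by auto
      qed
      have g1: "rid (E G) ((rid (insert eG (E G)) (if f (pa G j) = a then g(eG := e2) else g(j := e2, eG := e1)))(j := e1)) = g"
      proof
        fix x show "rid (E G) ((rid (insert eG (E G)) (if f (pa G j) = a then g(eG := e2) else g(j := e2, eG := e1)))(j := e1)) x = g x"
          using isosD(3)[OF fg, of x] eG gj jE unfolding rid_def by auto
      qed
      show "R (Ext y) = y" unfolding ye R_def Ext_def by (simp only: prod.case Let_def j_def[symmetric] f1 g1)
    qed
    show "R ` P \<subseteq> isos G C"
    proof
      fix z assume "z \<in> R ` P"
      then obtain x where x: "x \<in> P" "z = R x" by blast
      obtain j f g where xe: "x = (j, f, g)" by (cases x) auto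
      have j: "j \<in> Oj" and fg: "(f, g) \<in> isos (IP j) D" using x unfolding P_def xe by auto
      have jE: "j \<in> E G" using j OE by auto
      have rs: "graph_morph G C f (g(j := e1))" using restr[OF jE isosD(1)[OF fg]] by blast
      show "z \<in> isos G C" unfolding x xe R_def using rid_in_isos[OF wfG rs] by simp
    qed
    show "Ext ` isos G C \<subseteq> P"
    proof
      fix z assume "z \<in> Ext ` isos G C"
      then obtain y where y: "y \<in> isos G C" "z = Ext y" by blast
      obtain f g where ye: "y = (f, g)" by (cases y) auto
      have fg: "(f, g) \<in> isos G C" using y ye by simp
      have m: "graph_morph G C f g" using isosD(1)[OF fg] .
      have bg: "bij_betw g (E G) (E C)" using morph_bij(2)[OF m] .
      define j where "j = inv_into (E G) g e1"
      have jE: "j \<in> E G" unfolding j_def using bg e1C(1) by (metis bij_betw_def inv_into_into)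
      have gj: "g j = e1" unfolding j_def using bg e1C(1) by (metis bij_betw_def f_inv_into_f)
      have etyj: "ety G j = El" using m jE gj e1C(2) unfolding graph_morph_def by metis
      have me: "graph_morph (IP j) D (f(wG := w)) (if f (pa G j) = a then g(eG := e2) else g(j := e2, eG := e1))"
        unfolding IP_def D
        by (rule extend_morph[OF wfG jE endsj[OF jE] wG eG twoG wfC e1C w e2 twoC m gj])
      have VIP: "V (IP j) = insert wG (V G)" "E (IP j) = insert eG (E G)" unfolding IP_def by (simp_all add: ins_simps)
      have inI: "(rid (insert wG (V G)) (f(wG := w)),
                  rid (insert eG (E G)) (if f (pa G j) = a then g(eG := e2) else g(j := e2, eG := e1))) \<in> isos (IP j) D"
        using rid_in_isos[OF wfIP[OF jE etyj] me] VIP by simp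
      have jO: "j \<in> Oj" unfolding Oj_def el_edges_def
        using jE etyj IPeq[OF jE] me unfolding graph_iso_def by auto
      show "z \<in> P" unfolding y ye Ext_def P_def by (simp only: prod.case Let_def j_def[symmetric]) (rule SigmaI[where B="\<lambda>j. isos (IP j) D", OF jO inI])
    qed
  qed
  have cardP: "card P = card (isos G C)" using bij by (rule bij_betw_same_card)
  have cardIP: "card (isos (IP j) D) = Sym D" if "j \<in> Oj" for j
  proof -
    have jE: "j \<in> E G" "ety G j = El" using that unfolding Oj_def el_edges_def by auto
    have "graph_iso (IP j) D" using that IPeq[OF jE(1)] unfolding Oj_def by simp
    then have "graph_iso D (IP j)" using iso_sym wfIP[OF jE] by blast
    then obtain f g where "graph_morph D (IP j) f g" unfolding graph_iso_def by blast
    then have "card (isos (IP j) D) = card (isos D D)" by (rule card_isos_left[OF wfDD wfIP[OF jE]])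
    then show ?thesis by (simp add: Sym_isos)
  qed
  have finIso: "finite (isos (IP j) D)" if "j \<in> Oj" for j
  proof -
    have jE: "j \<in> E G" "ety G j = El" using that unfolding Oj_def el_edges_def by auto
    show ?thesis using wfD(1,2)[OF wfIP[OF jE]] wfD(1,2)[OF wfDD] by (rule finite_isos)
  qed
  have "card P = (\<Sum>j\<in>Oj. card (isos (IP j) D))" unfolding P_def using finO finIso by (simp add: card_SigmaI)
  also have "\<dots> = card Oj * Sym D" using cardIP by simp
  finally have cP: "card P = card Oj * Sym D" .
  have cGC: "card (isos G C) = Sym G"
  proof -
    obtain f g where "graph_morph C G f g" using iso_sym[OF wfG iso] unfolding graph_iso_def by blast
    then have "card (isos G C) = card (isos G G)" by (rule card_isos_right[OF wfG wfC])
    then show ?thesis by (simp add: Sym_isos)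
  qed
  show "card Oj * Sym D = Sym G" using cP cardP cGC by simp
  have "isos G C \<noteq> {}" using iso rid_in_isos[OF wfG] unfolding graph_iso_def by blast
  then have "P \<noteq> {}" using bij unfolding bij_betw_def by auto
  then show "Oj \<noteq> {}" unfolding P_def by auto
qed

lemma EC_rep:
  assumes "c \<in> el_classes L"
  shows "wf_graph (rep c)" "onePI (rep c)" "residue_el (rep c)" "loops (rep c) = int L"
    "iso_class (rep c) = c"
proof -
  obtain G where G: "c = iso_class G" "wf_graph G" "onePI G" "residue_el G" "loops G = int L"
    using assms unfolding el_classes_def by blast
  have i: "graph_iso G (rep c)" using rep_iso[OF G(2)] G(1) by simp
  show "wf_graph (rep c)" using rep_wf[OF G(2)] G(1) by simp
  show "onePI (rep c)" using iso_props(1)[OF i G(3)] .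
  show "loops (rep c) = int L" using iso_props(2)[OF i G(3)] G(5) by simp
  show "residue_el (rep c)" using iso_props(3,4)[OF i G(3)] G(4) unfolding residue_el_def by auto
  show "iso_class (rep c) = c" using iso_class_rep[OF G(2)] G(1) by simp
qed

lemma VC_rep:
  assumes "d \<in> v_classes L"
  shows "wf_graph (rep d)" "onePI (rep d)" "residue_v (rep d)" "loops (rep d) = int L"
    "iso_class (rep d) = d"
proof -
  obtain G where G: "d = iso_class G" "wf_graph G" "onePI G" "residue_v G" "loops G = int L"
    using assms unfolding v_classes_def by blast
  have i: "graph_iso G (rep d)" using rep_iso[OF G(2)] G(1) by simp
  show "wf_graph (rep d)" using rep_wf[OF G(2)] G(1) by simp
  show "onePI (rep d)" using iso_props(1)[OF i G(3)] .
  show "loops (rep d) = int L" using iso_props(2)[OF i G(3)] G(5) by simp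
  show "residue_v (rep d)" using iso_props(3,4)[OF i G(3)] G(4) unfolding residue_v_def by auto
  show "iso_class (rep d) = d" using iso_class_rep[OF G(2)] G(1) by simp
qed

lemma ins_in_VC:
  assumes c: "c \<in> el_classes L" and j: "j \<in> el_edges (rep c)"
  shows "wf_graph (insert_photon (rep c) j)" "iso_class (insert_photon (rep c) j) \<in> v_classes L"
proof -
  let ?G = "rep c"
  have wf: "wf_graph ?G" and p: "onePI ?G" and r: "residue_el ?G" and l: "loops ?G = int L"
    using EC_rep[OF c] by auto
  have jE: "j \<in> E ?G" "ety ?G j = El" using j unfolding el_edges_def by auto
  have two: "2 \<notin> X ?G" using r unfolding residue_el_def by auto
  have w: "fresh (V ?G) \<notin> V ?G" using fresh_notin wfD(1)[OF wf] by simp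
  have e: "fresh (E ?G) \<notin> E ?G" using fresh_notin wfD(2)[OF wf] by simp
  have eq: "insert_photon ?G j = ins ?G j (pa ?G j) (pbb ?G j) (fresh (V ?G)) (fresh (E ?G))"
    using insert_photon_ins'(2)[OF wf jE(1)] .
  have en: "ends ?G j = {#pa ?G j, pbb ?G j#}" using insert_photon_ins'(1)[OF wf jE(1)] .
  have wf': "wf_graph (insert_photon ?G j)" unfolding eq by (rule wf_ins[OF wf jE en e two w])
  have p': "onePI (insert_photon ?G j)" "loops (insert_photon ?G j) = int L"
    unfolding eq using onePI_ins[OF wf p jE en e two w] l by auto
  have r': "residue_v (insert_photon ?G j)" using r unfolding eq residue_v_def residue_el_def
    by (auto simp: ins_simps)
  show "wf_graph (insert_photon (rep c) j)" by (rule wf')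
  show "iso_class (insert_photon (rep c) j) \<in> v_classes L"
    unfolding v_classes_def using wf' p' r' by blast
qed

lemma fiber:
  assumes d: "d \<in> v_classes L"
  obtains c0 Oj where "c0 \<in> el_classes L" "Oj \<subseteq> el_edges (rep c0)" "finite Oj" "Oj \<noteq> {}"
    "card Oj * Sym (rep d) = Sym (rep c0)"
    "\<And>c j. c \<in> el_classes L \<Longrightarrow> j \<in> el_edges (rep c) \<Longrightarrow>
        iso_class (insert_photon (rep c) j) = d \<longleftrightarrow> c = c0 \<and> j \<in> Oj"
proof -
  let ?D = "rep d"
  have wfD': "wf_graph ?D" and pD: "onePI ?D" and rD: "residue_v ?D" and lD: "loops ?D = int L"
    and cD: "iso_class ?D = d" using VC_rep[OF d] by auto
  obtain C e1 a b e2 where C: "?D = ins C e1 a b (xv ?D 2) e2" "wf_graph C" "onePI C" "loops C = loops ?D"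
    "residue_el C" "e1 \<in> E C" "ety C e1 = El" "ends C e1 = {#a, b#}" "a \<noteq> b"
    "xv ?D 2 \<notin> V C" "e2 \<notin> E C" "2 \<notin> X C"
    using contract[OF wfD' pD rD] by blast
  define c0 where "c0 = iso_class C"
  have c0: "c0 \<in> el_classes L" unfolding c0_def el_classes_def using C lD by auto
  let ?G = "rep c0"
  have wfG: "wf_graph ?G" and rG: "residue_el ?G" using EC_rep[OF c0] by auto
  have twoG: "2 \<notin> X ?G" using rG unfolding residue_el_def by auto
  have isoGC: "graph_iso ?G C" using iso_sym[OF C(2) rep_iso[OF C(2)]] rep_wf[OF C(2)] unfolding c0_def
    by blast
  define Oj where "Oj = {j\<in>el_edges ?G. graph_iso (insert_photon ?G j) ?D}"
  have fc: "card Oj * Sym ?D = Sym ?G" "Oj \<noteq> {}" "finite Oj"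
    using fiber_count[OF wfG twoG C(2) C(6,7,8,9,10,11,12,1) wfD' isoGC] unfolding Oj_def by auto
  have sub: "Oj \<subseteq> el_edges ?G" unfolding Oj_def by auto
  have char: "iso_class (insert_photon (rep c) j) = d \<longleftrightarrow> c = c0 \<and> j \<in> Oj"
    if c: "c \<in> el_classes L" and j: "j \<in> el_edges (rep c)" for c j
  proof
    assume h: "iso_class (insert_photon (rep c) j) = d"
    have wfI: "wf_graph (insert_photon (rep c) j)" using ins_in_VC[OF c j] by simp
    have iso: "graph_iso (insert_photon (rep c) j) ?D"
      using h cD iso_class_eq_iff[OF wfI wfD'] by simp
    have wfc: "wf_graph (rep c)" and rc: "residue_el (rep c)" and cc: "iso_class (rep c) = c"
      using EC_rep[OF c] by auto
    have jE: "j \<in> E (rep c)" using j unfolding el_edges_def by auto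
    have twoc: "2 \<notin> X (rep c)" using rc unfolding residue_el_def by auto
    obtain f g where m: "graph_morph (insert_photon (rep c) j) ?D f g" using iso unfolding graph_iso_def by blast
    have m': "graph_morph (ins (rep c) j (pa (rep c) j) (pbb (rep c) j) (fresh (V (rep c))) (fresh (E (rep c))))
        (ins C e1 a b (xv ?D 2) e2) f g"
      using m insert_photon_ins'(2)[OF wfc jE] C(1) by simp
    have "graph_morph (rep c) C f (g(j := e1))"
      using restrict_morph(1)[OF wfc jE insert_photon_ins'(1)[OF wfc jE]
          fresh_notin[OF wfD(1)[OF wfc]] fresh_notin[OF wfD(2)[OF wfc]] twoc C(2,6,7,8,10,11,12) m'] .
    then have "iso_class (rep c) = iso_class C" using iso_class_eq wfc C(2) unfolding graph_iso_def by blast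
    then have cc0: "c = c0" using cc unfolding c0_def by simp
    show "c = c0 \<and> j \<in> Oj" using cc0 j iso unfolding Oj_def by simp
  next
    assume h: "c = c0 \<and> j \<in> Oj"
    then have iso: "graph_iso (insert_photon ?G j) ?D" unfolding Oj_def by simp
    have wfI: "wf_graph (insert_photon ?G j)" using ins_in_VC[OF c0] h sub by blast
    show "iso_class (insert_photon (rep c) j) = d" using h iso_class_eq[OF wfI wfD' iso] cD by simp
  qed
  show ?thesis using that[OF c0 sub fc(3) fc(2) fc(1) char] by blast
qed

lemma el_nonempty:
  assumes wf: "wf_graph G" and p: "onePI G" and r: "residue_el G"
  shows "el_edges G \<noteq> {}"
proof
  assume none: "el_edges G = {}"
  have X: "X G = {0, 1}" "xty G 0 = El" "xty G 1 = El" using r unfolding residue_el_def by auto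
  have finE: "finite (E G)" using wfD(2)[OF wf] .
  have c: "connected_graph G" using p unfolding onePI_def by simp
  have lnz: "loops G \<noteq> 0" using p c unfolding onePI_def is_tree_def by simp
  have Ph: "\<And>e. e \<in> E G \<Longrightarrow> ety G e = Ph"
  proof -
    fix e assume e: "e \<in> E G"
    show "ety G e = Ph" using none e unfolding el_edges_def by (cases "ety G e") auto
  qed
  have es0: "sum (es G v El) (E G) = 0" for v using Ph by (simp add: es_def)
  have Vsub: "v = xv G 0" if v: "v \<in> V G" for v
  proof (rule ccontr)
    assume n: "v \<noteq> xv G 0"
    have "card {l\<in>X G. xty G l = El \<and> xv G l = v} = 2"
      using incid_es[OF finE, of v El] wfD(7)[OF wf v] es0[of v] by simp
    moreover have "{l\<in>X G. xty G l = El \<and> xv G l = v} \<subseteq> {1}" using X n by auto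
    then have "card {l\<in>X G. xty G l = El \<and> xv G l = v} \<le> card {1::nat}" by (intro card_mono) auto
    then have "card {l\<in>X G. xty G l = El \<and> xv G l = v} \<le> 1" by simp
    ultimately show False by simp
  qed
  define u where "u = xv G 0"
  have uV: "u \<in> V G" unfolding u_def using wfD(6)[OF wf, of 0] X by simp
  have VG: "V G = {u}"
  proof
    show "V G \<subseteq> {u}" using Vsub unfolding u_def by blast
    show "{u} \<subseteq> V G" using uV by simp
  qed
  have EG: "E G = {}"
  proof (rule ccontr)
    assume "E G \<noteq> {}"
    then obtain e where e: "e \<in> E G" by blast
    have "set_mset (ends G e) \<subseteq> {u}" using wfD(5)[OF wf e] VG by simp
    then have "ends G e = replicate_mset (size (ends G e)) u" by (rule set_mset_subset_singletonD)
    then have "ends G e = {#u, u#}" using wfD(4)[OF wf e] by (simp add: numeral_2_eq_2)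
    then have "es G u Ph e = 2" using Ph[OF e] by (simp add: es_def)
    moreover have "es G u Ph e \<le> sum (es G u Ph) (E G)" using member_le_sum[of e "E G" "es G u Ph"] finE e by simp
    moreover have "sum (es G u Ph) (E G) \<le> 1" using incid_es[OF finE, of u Ph] wfD(8)[OF wf uV] by simp
    ultimately show False by simp
  qed
  have "loops G = int (card (E G)) - int (card (V G)) + 1" by (rule loops_connected[OF c])
  then have "loops G = 0" unfolding VG EG by simp
  then show False using lnz by simp
qed

lemma hscale_sum: "hscale r (sum p A) = (\<Sum>i\<in>A. hscale r (p i))"
  unfolding hscale_def by (simp add: sum_distrib_left)

lemma hscale_add: "hscale r (p + q) = hscale r p + hscale r q"
  unfolding hscale_def by (simp add: distrib_left)

lemma single_sum: "Poly_Mapping.single k (sum r A) = (\<Sum>i\<in>A. Poly_Mapping.single k (r i))"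
proof (cases "finite A")
  case True then show ?thesis by (induction A rule: finite_induct) (auto simp: single_add)
qed simp

lemma hscale_sum_left: "hscale (sum r A) p = (\<Sum>i\<in>A. hscale (r i) p)"
  unfolding hscale_def single_sum by (simp add: sum_distrib_right)

lemma gen_rep: "wf_graph G \<Longrightarrow> gen G = gen (rep (iso_class G))"
  unfolding gen_def by (simp add: iso_class_rep)

lemma second_conj:
  "(\<Sum>c\<in>el_classes L. hscale (1 / of_nat (Sym (rep c)))
          (\<Sum>i\<in>el_edges (rep c). gen (insert_photon (rep c) i)))
      = (\<Sum>c\<in>v_classes L. hscale (1 / of_nat (Sym (rep c))) (gen (rep c)))"
proof -
  let ?EC = "el_classes L" and ?VC = "v_classes L"
  define wc :: "fgraph set \<Rightarrow> rat" where "wc c = 1 / of_nat (Sym (rep c))" for c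
  define \<pi> where "\<pi> x = iso_class (insert_photon (rep (fst x)) (snd x))" for x :: "fgraph set \<times> nat"
  show ?thesis
  proof (cases "finite ?EC")
    case False
    define \<phi> where "\<phi> c = \<pi> (c, SOME j. j \<in> el_edges (rep c))" for c
    have phiV: "\<phi> c \<in> ?VC \<and> (SOME j. j \<in> el_edges (rep c)) \<in> el_edges (rep c)" if c: "c \<in> ?EC" for c
    proof -
      have "el_edges (rep c) \<noteq> {}" using el_nonempty EC_rep[OF c] by blast
      then have j: "(SOME j. j \<in> el_edges (rep c)) \<in> el_edges (rep c)" by (meson ex_in_conv someI_ex)
      show ?thesis using ins_in_VC(2)[OF c j] j unfolding \<phi>_def \<pi>_def by simp
    qed
    have inj: "inj_on \<phi> ?EC"
    proof (rule inj_onI)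
      fix c c' assume c: "c \<in> ?EC" and c': "c' \<in> ?EC" and eq: "\<phi> c = \<phi> c'"
      define dd where "dd = \<phi> c"
      have d: "dd \<in> ?VC" using phiV[OF c] unfolding dd_def by simp
      obtain c0 Oj where f: "c0 \<in> ?EC" "Oj \<subseteq> el_edges (rep c0)" "finite Oj" "Oj \<noteq> {}"
        "card Oj * Sym (rep dd) = Sym (rep c0)"
        "\<And>c j. c \<in> ?EC \<Longrightarrow> j \<in> el_edges (rep c) \<Longrightarrow>
          iso_class (insert_photon (rep c) j) = dd \<longleftrightarrow> c = c0 \<and> j \<in> Oj"
        by (rule fiber[OF d]) (rule that; assumption+)
      have j1: "(SOME j. j \<in> el_edges (rep c)) \<in> el_edges (rep c)" using phiV[OF c] by simp
      have j2: "(SOME j. j \<in> el_edges (rep c')) \<in> el_edges (rep c')" using phiV[OF c'] by simp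
      have "c = c0" using f(6)[OF c j1] unfolding dd_def \<phi>_def \<pi>_def by simp
      moreover have "c' = c0" using f(6)[OF c' j2] eq unfolding dd_def \<phi>_def \<pi>_def by simp
      ultimately show "c = c'" by simp
    qed
    have "\<phi> ` ?EC \<subseteq> ?VC" using phiV by blast
    moreover have "infinite (\<phi> ` ?EC)" using False inj finite_imageD by blast
    ultimately have "infinite ?VC" using finite_subset by blast
    then show ?thesis using False by simp
  next
    case True
    define S where "S = Sigma ?EC (\<lambda>c. el_edges (rep c))"
    have finEl: "finite (el_edges (rep c))" if "c \<in> ?EC" for c
      using wfD(2)[OF EC_rep(1)[OF that]] unfolding el_edges_def by simp
    have finS: "finite S" unfolding S_def using True finEl by simp
    have piS: "\<pi> ` S \<subseteq> ?VC" unfolding S_def \<pi>_def using ins_in_VC(2) by auto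
    have VCsub: "?VC \<subseteq> \<pi> ` S"
    proof
      fix d assume d: "d \<in> ?VC"
      obtain c0 Oj where f: "c0 \<in> ?EC" "Oj \<subseteq> el_edges (rep c0)" "finite Oj" "Oj \<noteq> {}"
        "card Oj * Sym (rep d) = Sym (rep c0)"
        "\<And>c j. c \<in> ?EC \<Longrightarrow> j \<in> el_edges (rep c) \<Longrightarrow>
          iso_class (insert_photon (rep c) j) = d \<longleftrightarrow> c = c0 \<and> j \<in> Oj"
        by (rule fiber[OF d]) (rule that; assumption+)
      obtain j where j: "j \<in> Oj" using f(4) by blast
      have "\<pi> (c0, j) = d" using f(6)[OF f(1)] f(2) j unfolding \<pi>_def by auto
      moreover have "(c0, j) \<in> S" using f(1,2) j unfolding S_def by auto
      ultimately show "d \<in> \<pi> ` S" by force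
    qed
    have finVC: "finite ?VC" using VCsub finS finite_surj by blast
    have fibsum: "(\<Sum>x\<in>{x\<in>S. \<pi> x = d}. wc (fst x)) = wc d" if d: "d \<in> ?VC" for d
    proof -
      obtain c0 Oj where f: "c0 \<in> ?EC" "Oj \<subseteq> el_edges (rep c0)" "finite Oj" "Oj \<noteq> {}"
        "card Oj * Sym (rep d) = Sym (rep c0)"
        "\<And>c j. c \<in> ?EC \<Longrightarrow> j \<in> el_edges (rep c) \<Longrightarrow>
          iso_class (insert_photon (rep c) j) = d \<longleftrightarrow> c = c0 \<and> j \<in> Oj"
        by (rule fiber[OF d]) (rule that; assumption+)
      have fib: "{x\<in>S. \<pi> x = d} = {c0} \<times> Oj"
      proof (rule set_eqI)
        fix x :: "fgraph set \<times> nat"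
        obtain c j where x: "x = (c, j)" by (cases x) auto
        show "x \<in> {x\<in>S. \<pi> x = d} \<longleftrightarrow> x \<in> {c0} \<times> Oj"
        proof
          assume "x \<in> {x\<in>S. \<pi> x = d}"
          then have c: "c \<in> ?EC" "j \<in> el_edges (rep c)" "iso_class (insert_photon (rep c) j) = d"
            unfolding x S_def \<pi>_def by auto
          then show "x \<in> {c0} \<times> Oj" using f(6)[OF c(1,2)] unfolding x by simp
        next
          assume "x \<in> {c0} \<times> Oj"
          then have c: "c = c0" "j \<in> Oj" unfolding x by auto
          then have j: "j \<in> el_edges (rep c0)" using f(2) by auto
          have "iso_class (insert_photon (rep c0) j) = d" using f(6)[OF f(1) j] c by simp
          then show "x \<in> {x\<in>S. \<pi> x = d}" unfolding x S_def \<pi>_def using c f(1) j by simp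
        qed
      qed
      have "(\<Sum>x\<in>{x\<in>S. \<pi> x = d}. wc (fst x)) = of_nat (card Oj) * wc c0"
      proof -
        have "(\<Sum>x\<in>{c0} \<times> Oj. wc (fst x)) = (\<Sum>x\<in>{c0} \<times> Oj. wc c0)" by (rule sum.cong) auto
        also have "\<dots> = of_nat (card ({c0} \<times> Oj)) * wc c0" by simp
        also have "card ({c0} \<times> Oj) = card Oj" by (simp add: card_cartesian_product_singleton)
        finally show ?thesis unfolding fib .
      qed
      also have "\<dots> = wc d"
      proof -
        have cpos: "card Oj \<noteq> 0" using f(3,4) by simp
        show ?thesis
        proof (cases "Sym (rep c0) = 0")
          case True
          then have "Sym (rep d) = 0" using f(5) cpos by simp
          then show ?thesis using True unfolding wc_def by simp
        next
          case False
          then have sd: "Sym (rep d) \<noteq> 0" using f(5) by (metis mult_0_right)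
          have "of_nat (Sym (rep c0)) = (of_nat (card Oj) * of_nat (Sym (rep d)) :: rat)"
            using f(5) by (metis of_nat_mult)
          then show ?thesis unfolding wc_def using cpos sd by (simp add: field_simps)
        qed
      qed
      finally show ?thesis .
    qed
    have "(\<Sum>c\<in>?EC. hscale (wc c) (\<Sum>i\<in>el_edges (rep c). gen (insert_photon (rep c) i)))
        = (\<Sum>c\<in>?EC. \<Sum>i\<in>el_edges (rep c). hscale (wc c) (gen (insert_photon (rep c) i)))"
      by (simp add: hscale_sum)
    also have "\<dots> = (\<Sum>x\<in>S. hscale (wc (fst x)) (gen (insert_photon (rep (fst x)) (snd x))))"
      unfolding S_def using True finEl by (simp add: sum.Sigma case_prod_beta)
    also have "\<dots> = (\<Sum>x\<in>S. hscale (wc (fst x)) (gen (rep (\<pi> x))))"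
    proof (rule sum.cong[OF refl])
      fix x assume x: "x \<in> S"
      have "wf_graph (insert_photon (rep (fst x)) (snd x))" using x ins_in_VC(1) unfolding S_def by auto
      then show "hscale (wc (fst x)) (gen (insert_photon (rep (fst x)) (snd x))) = hscale (wc (fst x)) (gen (rep (\<pi> x)))"
        unfolding \<pi>_def using gen_rep by simp
    qed
    also have "\<dots> = (\<Sum>d\<in>?VC. \<Sum>x\<in>{x\<in>S. \<pi> x = d}. hscale (wc (fst x)) (gen (rep (\<pi> x))))"
      by (rule sum.group[OF finS finVC piS, symmetric])
    also have "\<dots> = (\<Sum>d\<in>?VC. hscale (wc d) (gen (rep d)))"
    proof (rule sum.cong[OF refl])
      fix d assume d: "d \<in> ?VC"
      have "(\<Sum>x\<in>{x\<in>S. \<pi> x = d}. hscale (wc (fst x)) (gen (rep (\<pi> x))))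
          = (\<Sum>x\<in>{x\<in>S. \<pi> x = d}. hscale (wc (fst x)) (gen (rep d)))" by simp
      also have "\<dots> = hscale (\<Sum>x\<in>{x\<in>S. \<pi> x = d}. wc (fst x)) (gen (rep d))" by (simp add: hscale_sum_left)
      also have "\<dots> = hscale (wc d) (gen (rep d))" using fibsum[OF d] by simp
      finally show "(\<Sum>x\<in>{x\<in>S. \<pi> x = d}. hscale (wc (fst x)) (gen (rep (\<pi> x)))) = hscale (wc d) (gen (rep d))" .
    qed
    finally show ?thesis unfolding wc_def .
  qed
qed

theorem mainTheorem7:
  fixes L :: nat
  assumes "L \<ge> 1"
  shows "W_L L = (\<Sum>c\<in>el_classes L. hscale (1 / of_nat (Sym (rep c))) (WT (rep c)))
    \<and> (\<Sum>c\<in>el_classes L. hscale (1 / of_nat (Sym (rep c)))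
          (\<Sum>i\<in>el_edges (rep c). gen (insert_photon (rep c) i)))
      = (\<Sum>c\<in>v_classes L. hscale (1 / of_nat (Sym (rep c))) (gen (rep c)))"
proof
  have B: "(\<Sum>c\<in>el_classes L. hscale (1 / of_nat (Sym (rep c)))
          (\<Sum>i\<in>el_edges (rep c). gen (insert_photon (rep c) i)))
      = (\<Sum>c\<in>v_classes L. hscale (1 / of_nat (Sym (rep c))) (gen (rep c)))"
    by (rule second_conj)
  show "(\<Sum>c\<in>el_classes L. hscale (1 / of_nat (Sym (rep c)))
          (\<Sum>i\<in>el_edges (rep c). gen (insert_photon (rep c) i)))
      = (\<Sum>c\<in>v_classes L. hscale (1 / of_nat (Sym (rep c))) (gen (rep c)))" by (rule B)
  have "(\<Sum>c\<in>el_classes L. hscale (1 / of_nat (Sym (rep c))) (WT (rep c)))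
      = (\<Sum>c\<in>el_classes L. hscale (1 / of_nat (Sym (rep c)))
          (\<Sum>i\<in>el_edges (rep c). gen (insert_photon (rep c) i)))
        + (\<Sum>c\<in>el_classes L. hscale (1 / of_nat (Sym (rep c))) (gen (rep c)))"
    unfolding WT_def hscale_add by (simp add: sum.distrib)
  then show "W_L L = (\<Sum>c\<in>el_classes L. hscale (1 / of_nat (Sym (rep c))) (WT (rep c)))"
    unfolding W_L_def B by simp
qed

end
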